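(* Fix $\lambda>0$ and let $\mathrm{SU}(2)\subset\mathrm{SO}(4)\times\{1\}$ act on $\Lambda^2_-S^4$ as the lift of its standard action (via $(x_1,\dots,x_4)\leftrightarrow(x_1+ix_2,x_3+ix_4)\in\mathbb C^2$, fixing $x_5$). Let $I\subset\mathbb R$ be an open interval and $c(t)=\big({}^t(x_1(t),0,0,0,x_5(t)),{}^t(a_1(t),a_2(t),a_3(t))\big)$ a smooth path with $x_1(t)>0$, $x_1^2+x_5^2=1$. Then $\varphi_\lambda$ vanishes on the tangent spaces of $\mathrm{SU}(2)\cdot c(I)$ if and only if, for $i=1,2,3$, $$4\dot a_i\,\frac{1-x_5}{1+x_5}-a_i\,\frac{d}{dt}\Big\{\log(\lambda+r^2)+8\log(1+x_5)\Big\}=0,$$ where $r^2=a_1^2+a_2^2+a_3^2$.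
   Context: Let $S^4=\{x={}^t(x_1,\dots,x_5)\in\mathbb R^5:|x|=1\}$ with the round metric and let $\pi:\Lambda^2_-S^4\to S^4$ be the rank-3 bundle of anti-self-dual 2-forms. On $S^4\setminus\{x_5=\pm1\}$ use the oriented orthonormal frame $e_1=\frac{1}{\sqrt{1-x_5^2}}{}^t(-x_2,x_1,-x_4,x_3,0)$, $e_2=\frac{1}{\sqrt{1-x_5^2}}{}^t(-x_3,x_4,x_1,-x_2,0)$, $e_3=\frac{1}{\sqrt{1-x_5^2}}{}^t(-x_4,-x_3,x_2,x_1,0)$, $e_4=\frac{1}{\sqrt{1-x_5^2}}{}^t(-x_1x_5,-x_2x_5,-x_3x_5,-x_4x_5,1-x_5^2)$ with dual coframe $e^1,\dots,e^4$, and set $\omega_1=e^{12}-e^{34}$, $\omega_2=e^{13}-e^{42}$, $\omega_3=e^{14}-e^{23}$ ($e^{ij}=e^i\wedge e^j$), a local frame of $\Lambda^2_-S^4$. The point $\sum_i a_i\omega_i|_x$ is written $(x,{}^t(a_1,a_2,a_3))$; $r^2=a_1^2+a_2^2+a_3^2$ is the squared fiber norm (globally defined). Write $\nabla\omega_i=\sum_j\gamma_{ij}\otimes\omega_j$ for the connection induced by the Levi-Civita connection and $b_i=da_i+\sum_j a_j\pi^*\gamma_{ji}$. For $\lambda>0$ the Bryant–Salamon 3-form is $\varphi_\lambda=2s_\lambda\sum_{i=1}^3 b_i\wedge\pi^*\omega_i+s_\lambda^{-3}b_1\wedge b_2\wedge b_3$ with $s_\lambda=(\lambda+r^2)^{1/4}$;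 it is a torsion-free $G_2$-structure. A 4-dimensional submanifold $L$ is coassociative iff $\varphi_\lambda|_{TL}=0$. $\mathrm{SO}(5)$ acts on $S^4$ linearly and on $\Lambda^2_-S^4$ by the induced action on 2-forms ($g\cdot\omega=(g^{-1})^*\omega$), preserving $\varphi_\lambda$. *)

theory Defs
  imports "HOL-Analysis.Analysis"
begin

text \<open>A point of the total space of the bundle of
anti-self-dual 2-forms over the chart of S^4 with x5 different from 1 and -1 is a pair
(x, a) with x in real^5 (the point of S^4 in ambient coordinates) and a in real^3
(the coefficients w.r.t. the frame omega_1, omega_2, omega_3).  Tangent vectors of
the total space are pairs (xi, alpha) in real^5 x real^3, xi tangent to S^4.\<close>

definition fc :: "real^3 \<Rightarrow> nat \<Rightarrow> real" where
  "fc a j = a $ (of_nat j)"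

text \<open>The orthonormal frame e_1,...,e_4 (ambient vectors in real^5).\<close>
definition frame :: "nat \<Rightarrow> real^5 \<Rightarrow> real^5" where
  "frame k x =
     (if k = 1 then (1 / sqrt (1 - (x$5)\<^sup>2)) *\<^sub>R vector [-(x$2), x$1, -(x$4), x$3, 0]
      else if k = 2 then (1 / sqrt (1 - (x$5)\<^sup>2)) *\<^sub>R vector [-(x$3), x$4, x$1, -(x$2), 0]
      else if k = 3 then (1 / sqrt (1 - (x$5)\<^sup>2)) *\<^sub>R vector [-(x$4), -(x$3), x$2, x$1, 0]
      else if k = 4 then (1 / sqrt (1 - (x$5)\<^sup>2)) *\<^sub>R
              vector [-(x$1) * x$5, -(x$2) * x$5, -(x$3) * x$5, -(x$4) * x$5, 1 - (x$5)\<^sup>2]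
      else 0)"

definition cof :: "nat \<Rightarrow> real^5 \<Rightarrow> real^5 \<Rightarrow> real" where
  "cof k x u = frame k x \<bullet> u"

text \<open>e^{kl} = e^k wedge e^l (determinant convention).\<close>
definition cof2 :: "nat \<Rightarrow> nat \<Rightarrow> real^5 \<Rightarrow> real^5 \<Rightarrow> real^5 \<Rightarrow> real" where
  "cof2 k l x u v = cof k x u * cof l x v - cof l x u * cof k x v"

definition om :: "nat \<Rightarrow> real^5 \<Rightarrow> real^5 \<Rightarrow> real^5 \<Rightarrow> real" where
  "om i x u v =
     (if i = 1 then cof2 1 2 x u v - cof2 3 4 x u v
      else if i = 2 then cof2 1 3 x u v - cof2 4 2 x u v
      else if i = 3 then cof2 1 4 x u v - cof2 2 3 x u v
      else 0)"

text \<open>Levi-Civita connection forms of the frame: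
  theta m k (xi) = < nabla_xi e_k , e_m >, where nabla_xi e_k is the tangential part
  of the ambient directional derivative of e_k.\<close>
definition Dframe :: "nat \<Rightarrow> real^5 \<Rightarrow> real^5 \<Rightarrow> real^5" where
  "Dframe k x xi = vector_derivative (\<lambda>s. frame k (x + s *\<^sub>R xi)) (at 0)"

definition theta :: "nat \<Rightarrow> nat \<Rightarrow> real^5 \<Rightarrow> real^5 \<Rightarrow> real" where
  "theta m k x xi = frame m x \<bullet> Dframe k x xi"

text \<open>(nabla_xi omega_i)(e_k, e_l), using that omega_i(e_k,e_l) is constant.\<close>
definition nom :: "nat \<Rightarrow> real^5 \<Rightarrow> real^5 \<Rightarrow> nat \<Rightarrow> nat \<Rightarrow> real" where
  "nom i x xi k l =
     - (\<Sum>m\<in>{1..4}. theta m k x xi * om i x (frame m x) (frame l x))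
     - (\<Sum>m\<in>{1..4}. theta m l x xi * om i x (frame k x) (frame m x))"

text \<open>gamma_ij with nabla omega_i = sum_j gamma_ij (x) omega_j; since the omega_j are
  orthogonal with squared norm 2, gamma_ij(xi) = 1/2 sum_{k<l} (nabla_xi omega_i)(e_k,e_l) omega_j(e_k,e_l).\<close>
definition gam :: "nat \<Rightarrow> nat \<Rightarrow> real^5 \<Rightarrow> real^5 \<Rightarrow> real" where
  "gam i j x xi = (1/4) * (\<Sum>k\<in>{1..4}. \<Sum>l\<in>{1..4}. nom i x xi k l * om j x (frame k x) (frame l x))"

type_synonym tpt = "(real^5) \<times> (real^3)"

definition bform :: "nat \<Rightarrow> tpt \<Rightarrow> tpt \<Rightarrow> real" where
  "bform i p V = fc (snd V) i + (\<Sum>j\<in>{1..3}. fc (snd p) j * gam j i (fst p) (fst V))"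

definition piom :: "nat \<Rightarrow> tpt \<Rightarrow> tpt \<Rightarrow> tpt \<Rightarrow> real" where
  "piom i p V W = om i (fst p) (fst V) (fst W)"

definition wedge12 :: "(tpt \<Rightarrow> real) \<Rightarrow> (tpt \<Rightarrow> tpt \<Rightarrow> real) \<Rightarrow> tpt \<Rightarrow> tpt \<Rightarrow> tpt \<Rightarrow> real" where
  "wedge12 \<beta> \<omega> U V W = \<beta> U * \<omega> V W - \<beta> V * \<omega> U W + \<beta> W * \<omega> U V"

definition wedge111 :: "(tpt \<Rightarrow> real) \<Rightarrow> (tpt \<Rightarrow> real) \<Rightarrow> (tpt \<Rightarrow> real) \<Rightarrow> tpt \<Rightarrow> tpt \<Rightarrow> tpt \<Rightarrow> real" where
  "wedge111 b1 b2 b3 U V W =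
     b1 U * (b2 V * b3 W - b2 W * b3 V)
   - b1 V * (b2 U * b3 W - b2 W * b3 U)
   + b1 W * (b2 U * b3 V - b2 V * b3 U)"

definition rsq :: "real^3 \<Rightarrow> real" where
  "rsq a = (\<Sum>j\<in>{1..3}. (fc a j)\<^sup>2)"

definition slam :: "real \<Rightarrow> real^3 \<Rightarrow> real" where
  "slam lam a = (lam + rsq a) powr (1/4)"

definition phiBS :: "real \<Rightarrow> tpt \<Rightarrow> tpt \<Rightarrow> tpt \<Rightarrow> tpt \<Rightarrow> real" where
  "phiBS lam p U V W =
     2 * slam lam (snd p) * (\<Sum>i\<in>{1..3}. wedge12 (bform i p) (piom i p) U V W)
   + (1 / (slam lam (snd p)) ^ 3) * wedge111 (bform 1 p) (bform 2 p) (bform 3 p) U V W"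

text \<open>SU(2) element [[al, -cnj be],[be, cnj al]] (|al|^2+|be|^2 = 1) acting on
  R^5 = C^2 x R via (x1,...,x4) <-> (x1 + i x2, x3 + i x4), fixing x5.\<close>
definition su2R5 :: "complex \<Rightarrow> complex \<Rightarrow> real^5 \<Rightarrow> real^5" where
  "su2R5 al be x =
     (let z1 = Complex (x$1) (x$2); z2 = Complex (x$3) (x$4);
          w1 = al * z1 - cnj be * z2; w2 = be * z1 + cnj al * z2
      in vector [Re w1, Im w1, Re w2, Im w2, x$5])"

text \<open>Induced action on 2-forms: g . (x, sum_j a_j omega_j|x) = (g x, (g^-1)^* sum_j a_j omega_j|x),
  re-expressed in the frame omega_i at g x.  The inverse of (al,be) is (cnj al, -be).\<close>
definition su2lift :: "complex \<Rightarrow> complex \<Rightarrow> tpt \<Rightarrow> tpt" where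
  "su2lift al be p =
     (let x = fst p; a = snd p; y = su2R5 al be x;
          ginv = su2R5 (cnj al) (- be);
          coef = (\<lambda>i. (1/4) * (\<Sum>k\<in>{1..4}. \<Sum>l\<in>{1..4}.
                    (\<Sum>j\<in>{1..3}. fc a j * om j x (ginv (frame k y)) (ginv (frame l y)))
                    * om i y (frame k y) (frame l y)))
      in (y, vector [coef 1, coef 2, coef 3]))"

text \<open>Tangent vectors of the image of F : SU(2) x I -> total space at F(al,be,t):
  velocities of images of differentiable curves in SU(2) x I through (al,be,t).\<close>
definition tanvecs :: "(complex \<Rightarrow> complex \<Rightarrow> real \<Rightarrow> tpt) \<Rightarrow> real set \<Rightarrow> complex \<Rightarrow> complex \<Rightarrow> real \<Rightarrow> tpt set" where
  "tanvecs F I al be t =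
     {V. \<exists>ga gb \<tau>. ga 0 = al \<and> gb 0 = be \<and> \<tau> 0 = t \<and>
          (\<forall>s. (cmod (ga s))\<^sup>2 + (cmod (gb s))\<^sup>2 = 1 \<and> \<tau> s \<in> I) \<and>
          ga differentiable (at 0) \<and> gb differentiable (at 0) \<and> \<tau> differentiable (at 0) \<and>
          ((\<lambda>s. F (ga s) (gb s) (\<tau> s)) has_vector_derivative V) (at 0)}"

definition phi_vanishes_on_orbit :: "real \<Rightarrow> real set \<Rightarrow> (real \<Rightarrow> tpt) \<Rightarrow> bool" where
  "phi_vanishes_on_orbit lam I c =
     (let F = (\<lambda>al be t. su2lift al be (c t)) in
      \<forall>t\<in>I. \<forall>al be. (cmod al)\<^sup>2 + (cmod be)\<^sup>2 = 1 \<longrightarrow>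
        (\<forall>U\<in>tanvecs F I al be t. \<forall>V\<in>tanvecs F I al be t. \<forall>W\<in>tanvecs F I al be t.
           phiBS lam (F al be t) U V W = 0))"

definition smooth_on :: "real set \<Rightarrow> (real \<Rightarrow> real) \<Rightarrow> bool" where
  "smooth_on I f = (\<forall>n. \<forall>t\<in>I. ((deriv ^^ n) f) differentiable (at t))"

end

theory Submission
  imports Defs
begin

lemma exhaust_5:
  fixes x :: 5
  shows "x = 1 \<or> x = 2 \<or> x = 3 \<or> x = 4 \<or> x = 5"
proof (induct x)
  case (of_int z)
  then have "z = 0 \<or> z = 1 \<or> z = 2 \<or> z = 3 \<or> z = 4" by fastforce
  then show ?case by auto
qed

lemma UNIV_5: "UNIV = {1, 2, 3, 4, 5::5}"
  using exhaust_5 by auto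

lemma sum_5: "sum f (UNIV::5 set) = f 1 + f 2 + f 3 + f 4 + f 5"
  unfolding UNIV_5 by (simp add: ac_simps)

lemma vector_5 [simp]:
 "(vector [a,b,c,d,e] ::('a::zero)^5)$1 = a"
 "(vector [a,b,c,d,e] ::('a::zero)^5)$2 = b"
 "(vector [a,b,c,d,e] ::('a::zero)^5)$3 = c"
 "(vector [a,b,c,d,e] ::('a::zero)^5)$4 = d"
 "(vector [a,b,c,d,e] ::('a::zero)^5)$5 = e"
  unfolding vector_def by simp_all

lemma inner5: "(u::real^5) \<bullet> v = u$1 * v$1 + u$2 * v$2 + u$3 * v$3 + u$4 * v$4 + u$5 * v$5"
  by (simp add: inner_vec_def sum_5)

lemma vec5_eq: "(u::real^5) = v \<longleftrightarrow> u$1=v$1 \<and> u$2=v$2 \<and> u$3=v$3 \<and> u$4=v$4 \<and> u$5=v$5"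
proof
  assume "u$1=v$1 \<and> u$2=v$2 \<and> u$3=v$3 \<and> u$4=v$4 \<and> u$5=v$5"
  then show "u = v" unfolding vec_eq_iff by (metis exhaust_5)
qed simp

lemma vec3_eq: "(u::real^3) = v \<longleftrightarrow> u$1=v$1 \<and> u$2=v$2 \<and> u$3=v$3"
proof
  assume "u$1=v$1 \<and> u$2=v$2 \<and> u$3=v$3"
  then show "u = v" unfolding vec_eq_iff by (metis exhaust_3)
qed simp

lemma su2R5_comp:
  "su2R5 al be x = vector [Re al * x$1 - Im al * x$2 - (Re be * x$3 + Im be * x$4),
                           Re al * x$2 + Im al * x$1 - (Re be * x$4 - Im be * x$3),
                           Re be * x$1 - Im be * x$2 + Re al * x$3 + Im al * x$4,
                           Re be * x$2 + Im be * x$1 + Re al * x$4 - Im al * x$3,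
                           x$5]"
  by (simp add: su2R5_def Let_def algebra_simps)

lemma vector5_scaleR: "c *\<^sub>R (vector [a,b,d,e,f] :: real^5) = vector [c*a, c*b, c*d, c*e, c*f]"
  by (simp add: vec5_eq)

lemma su2R5_scaleR: "su2R5 al be (c *\<^sub>R u) = c *\<^sub>R su2R5 al be u"
  by (simp add: su2R5_comp vec5_eq algebra_simps)

lemma su2R5_add: "su2R5 al be (u + v) = su2R5 al be u + su2R5 al be v"
  by (simp add: su2R5_comp vec5_eq algebra_simps)

lemma su2R5_5 [simp]: "su2R5 al be u $ 5 = u $ 5"
  by (simp add: su2R5_comp)

lemma frame_equiv: "frame k (su2R5 al be y) = su2R5 al be (frame k y)"
  unfolding frame_def
  by (simp add: su2R5_scaleR) (simp add: su2R5_comp vec5_eq algebra_simps)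

lemma unit_alg: "(cmod al)\<^sup>2 + (cmod be)\<^sup>2 = 1 \<Longrightarrow> (Re al)\<^sup>2 + (Im al)\<^sup>2 + (Re be)\<^sup>2 + (Im be)\<^sup>2 = 1"
  by (simp add: cmod_power2)

lemma su2R5_inner:
  assumes "(cmod al)\<^sup>2 + (cmod be)\<^sup>2 = 1"
  shows "su2R5 al be u \<bullet> su2R5 al be v = u \<bullet> v"
proof -
  have n: "(Re al)\<^sup>2 + (Im al)\<^sup>2 + (Re be)\<^sup>2 + (Im be)\<^sup>2 = 1" using unit_alg[OF assms] .
  have "su2R5 al be u \<bullet> su2R5 al be v =
     ((Re al)\<^sup>2 + (Im al)\<^sup>2 + (Re be)\<^sup>2 + (Im be)\<^sup>2) * (u$1 * v$1+u$2 * v$2+u$3 * v$3+u$4 * v$4) + u$5 * v$5"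
    by (simp add: inner5 su2R5_comp) (simp add: algebra_simps power2_eq_square)
  also have "\<dots> = u \<bullet> v" by (simp add: n inner5)
  finally show ?thesis .
qed

lemma su2R5_inv:
  assumes "(cmod al)\<^sup>2 + (cmod be)\<^sup>2 = 1"
  shows "su2R5 al be (su2R5 (cnj al) (- be) v) = v"
proof -
  have n: "(Re al)\<^sup>2 + (Im al)\<^sup>2 + (Re be)\<^sup>2 + (Im be)\<^sup>2 = 1" using unit_alg[OF assms] .
  show ?thesis
    apply (simp add: su2R5_comp vec5_eq)
    using n by algebra
qed

lemma su2R5_inv2:
  assumes "(cmod al)\<^sup>2 + (cmod be)\<^sup>2 = 1"
  shows "su2R5 (cnj al) (- be) (su2R5 al be v) = v"
proof -
  have n: "(Re al)\<^sup>2 + (Im al)\<^sup>2 + (Re be)\<^sup>2 + (Im be)\<^sup>2 = 1" using unit_alg[OF assms] .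
  show ?thesis
    apply (simp add: su2R5_comp vec5_eq)
    using n by algebra
qed

lemma cof_inv:
  assumes "(cmod al)\<^sup>2 + (cmod be)\<^sup>2 = 1"
  shows "cof k (su2R5 al be y) (su2R5 al be u) = cof k y u"
  by (simp add: cof_def frame_equiv su2R5_inner[OF assms])

lemma om_inv:
  assumes "(cmod al)\<^sup>2 + (cmod be)\<^sup>2 = 1"
  shows "om i (su2R5 al be y) (su2R5 al be u) (su2R5 al be v) = om i y u v"
  by (simp add: om_def cof2_def cof_inv[OF assms])

lemma sum4: "sum f {1..4::nat} = f 1 + f 2 + f 3 + f 4"
proof -
  have "{1..4::nat} = {1,2,3,4}" by auto
  then show ?thesis by (simp add: ac_simps)
qed

lemma sum3: "sum f {1..3::nat} = f 1 + f 2 + f 3"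
proof -
  have "{1..3::nat} = {1,2,3}" by auto
  then show ?thesis by (simp add: ac_simps)
qed

lemma sqrt_x1: "x1 > 0 \<Longrightarrow> x1\<^sup>2 + x5\<^sup>2 = 1 \<Longrightarrow> sqrt (1 - x5\<^sup>2) = x1"
  by (metis add_diff_cancel_right' less_eq_real_def real_sqrt_unique)

lemma frame_y0:
  assumes "x1 > 0" "x1\<^sup>2 + x5\<^sup>2 = 1"
  shows "frame 1 (vector [x1,0,0,0,x5]) = vector [0,1,0,0,0]"
        "frame 2 (vector [x1,0,0,0,x5]) = vector [0,0,1,0,0]"
        "frame 3 (vector [x1,0,0,0,x5]) = vector [0,0,0,1,0]"
        "frame 4 (vector [x1,0,0,0,x5]) = vector [-x5,0,0,0,x1]"
proof -
  have s: "sqrt (1 - x5\<^sup>2) = x1" using sqrt_x1 assms by blast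
  have e: "1 - x5\<^sup>2 = x1 * x1" using assms(2) by (simp add: power2_eq_square)
  show "frame 1 (vector [x1,0,0,0,x5]) = vector [0,1,0,0,0]"
        "frame 2 (vector [x1,0,0,0,x5]) = vector [0,0,1,0,0]"
        "frame 3 (vector [x1,0,0,0,x5]) = vector [0,0,0,1,0]"
    using assms(1) by (simp_all add: frame_def s vec5_eq)
  show "frame 4 (vector [x1,0,0,0,x5]) = vector [-x5,0,0,0,x1]"
    using assms(1) by (simp add: frame_def s vec5_eq e)
qed

lemma su2lift_y0:
  assumes u: "(cmod al)\<^sup>2 + (cmod be)\<^sup>2 = 1" and "x1 > 0" "x1\<^sup>2 + x5\<^sup>2 = 1"
  shows "su2lift al be (vector [x1,0,0,0,x5], a) = (su2R5 al be (vector [x1,0,0,0,x5]), a)"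
proof -
  define y0 :: "real^5" where "y0 = vector [x1,0,0,0,x5]"
  have fr: "frame 1 y0 = vector [0,1,0,0,0]" "frame 2 y0 = vector [0,0,1,0,0]"
        "frame 3 y0 = vector [0,0,0,1,0]" "frame 4 y0 = vector [-x5,0,0,0,x1]"
    using frame_y0[OF assms(2,3)] by (simp_all add: y0_def)
  have fr1: "frame (Suc 0) y0 = vector [0,1,0,0,0]" using fr(1) by simp
  have q: "x5 * x5 + x1 * x1 = 1" using assms(3) by (simp add: power2_eq_square)
  have ginv: "su2R5 (cnj al) (- be) (frame k (su2R5 al be y0)) = frame k y0" for k
    by (simp add: frame_equiv su2R5_inv2[OF u])
  have omg: "om i (su2R5 al be y0) (frame k (su2R5 al be y0)) (frame l (su2R5 al be y0))
      = om i y0 (frame k y0) (frame l y0)" for i k l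
    by (simp add: frame_equiv om_inv[OF u])
  have "snd (su2lift al be (y0, a)) = a"
    unfolding su2lift_def Let_def snd_conv fst_conv ginv omg sum4 sum3
    by (simp add: sum4 sum3 fr fr1 om_def cof2_def cof_def inner5 q vec3_eq fc_def)
  then show ?thesis by (simp add: su2lift_def Let_def y0_def)
qed

lemma vec5_hvd:
  assumes "(p1 has_real_derivative d1) (at x within S)" "(p2 has_real_derivative d2) (at x within S)"
    "(p3 has_real_derivative d3) (at x within S)" "(p4 has_real_derivative d4) (at x within S)"
    "(p5 has_real_derivative d5) (at x within S)"
  shows "((\<lambda>s. vector [p1 s, p2 s, p3 s, p4 s, p5 s] :: real^5) has_vector_derivative
           vector [d1, d2, d3, d4, d5]) (at x within S)"
proof -
  define b1 :: "real^5" where "b1 = vector [1,0,0,0,0]"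
  define b2 :: "real^5" where "b2 = vector [0,1,0,0,0]"
  define b3 :: "real^5" where "b3 = vector [0,0,1,0,0]"
  define b4 :: "real^5" where "b4 = vector [0,0,0,1,0]"
  define b5 :: "real^5" where "b5 = vector [0,0,0,0,1]"
  have eq: "(\<lambda>s. vector [p1 s, p2 s, p3 s, p4 s, p5 s] :: real^5) =
    (\<lambda>s. p1 s *\<^sub>R b1 + p2 s *\<^sub>R b2 + p3 s *\<^sub>R b3 + p4 s *\<^sub>R b4 + p5 s *\<^sub>R b5)"
    by (simp add: fun_eq_iff vec5_eq b1_def b2_def b3_def b4_def b5_def)
  have "((\<lambda>s. p1 s *\<^sub>R b1 + p2 s *\<^sub>R b2 + p3 s *\<^sub>R b3 + p4 s *\<^sub>R b4 + p5 s *\<^sub>R b5)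
     has_vector_derivative
     (p1 x *\<^sub>R 0 + d1 *\<^sub>R b1 + (p2 x *\<^sub>R 0 + d2 *\<^sub>R b2) + (p3 x *\<^sub>R 0 + d3 *\<^sub>R b3)
      + (p4 x *\<^sub>R 0 + d4 *\<^sub>R b4) + (p5 x *\<^sub>R 0 + d5 *\<^sub>R b5))) (at x within S)"
    by (intro has_vector_derivative_add has_vector_derivative_scaleR has_vector_derivative_const assms)
  moreover have "p1 x *\<^sub>R 0 + d1 *\<^sub>R b1 + (p2 x *\<^sub>R 0 + d2 *\<^sub>R b2) + (p3 x *\<^sub>R 0 + d3 *\<^sub>R b3)
      + (p4 x *\<^sub>R 0 + d4 *\<^sub>R b4) + (p5 x *\<^sub>R 0 + d5 *\<^sub>R b5) = vector [d1, d2, d3, d4, d5]"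
    by (simp add: vec5_eq b1_def b2_def b3_def b4_def b5_def)
  ultimately show ?thesis unfolding eq by simp
qed

lemma vec3_hvd:
  assumes "(p1 has_real_derivative d1) (at x within S)" "(p2 has_real_derivative d2) (at x within S)"
    "(p3 has_real_derivative d3) (at x within S)"
  shows "((\<lambda>s. vector [p1 s, p2 s, p3 s] :: real^3) has_vector_derivative
           vector [d1, d2, d3]) (at x within S)"
proof -
  define b1 :: "real^3" where "b1 = vector [1,0,0]"
  define b2 :: "real^3" where "b2 = vector [0,1,0]"
  define b3 :: "real^3" where "b3 = vector [0,0,1]"
  have eq: "(\<lambda>s. vector [p1 s, p2 s, p3 s] :: real^3) =
    (\<lambda>s. p1 s *\<^sub>R b1 + p2 s *\<^sub>R b2 + p3 s *\<^sub>R b3)"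
    by (simp add: fun_eq_iff vec3_eq b1_def b2_def b3_def)
  have "((\<lambda>s. p1 s *\<^sub>R b1 + p2 s *\<^sub>R b2 + p3 s *\<^sub>R b3)
     has_vector_derivative
     (p1 x *\<^sub>R 0 + d1 *\<^sub>R b1 + (p2 x *\<^sub>R 0 + d2 *\<^sub>R b2) + (p3 x *\<^sub>R 0 + d3 *\<^sub>R b3))) (at x within S)"
    by (intro has_vector_derivative_add has_vector_derivative_scaleR has_vector_derivative_const assms)
  moreover have "p1 x *\<^sub>R 0 + d1 *\<^sub>R b1 + (p2 x *\<^sub>R 0 + d2 *\<^sub>R b2) + (p3 x *\<^sub>R 0 + d3 *\<^sub>R b3)
      = vector [d1, d2, d3]"
    by (simp add: vec3_eq b1_def b2_def b3_def)
  ultimately show ?thesis unfolding eq by simp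
qed

definition rfac :: "real^5 \<Rightarrow> real" where "rfac x = 1 / sqrt (1 - (x$5)\<^sup>2)"

lemma rfac_deriv0:
  fixes a b :: real
  assumes p: "0 < 1 - a\<^sup>2"
  shows "((\<lambda>s. 1 / sqrt (1 - (a + s * b)\<^sup>2)) has_real_derivative
     (a * b / (sqrt (1 - a\<^sup>2) * (1 - a\<^sup>2)))) (at 0)"
proof -
  have d1: "((\<lambda>s. 1 - (a + s * b)\<^sup>2) has_real_derivative (- (2 * a * b))) (at 0)"
    by (auto intro!: derivative_eq_intros)
  have d2: "((\<lambda>s. sqrt (1 - (a + s * b)\<^sup>2)) has_real_derivative (inverse (sqrt (1 - a\<^sup>2)) / 2 * (- (2 * a * b)))) (at 0)"
    using DERIV_chain2[OF DERIV_real_sqrt d1] p by simp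
  have d3: "((\<lambda>s. inverse (sqrt (1 - (a + s * b)\<^sup>2))) has_real_derivative 
     (- (inverse (sqrt (1 - a\<^sup>2)) / 2 * (- (2 * a * b))) * inverse (sqrt (1 - a\<^sup>2) ^ 2))) (at 0)"
    using DERIV_inverse_fun[OF d2] p by simp
  have e: "- (inverse (sqrt (1 - a\<^sup>2)) / 2 * (- (2 * a * b))) * inverse (sqrt (1 - a\<^sup>2) ^ 2)
      = a * b / (sqrt (1 - a\<^sup>2) * (1 - a\<^sup>2))"
    using p by (simp add: field_simps)
  show ?thesis using d3 unfolding e by (simp add: divide_inverse)
qed

definition rfd :: "real^5 \<Rightarrow> real^5 \<Rightarrow> real" where
  "rfd y \<xi> = y$5 * \<xi>$5 / (sqrt (1 - (y$5)\<^sup>2) * (1 - (y$5)\<^sup>2))"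

lemma rfac_deriv:
  assumes "(y$5)\<^sup>2 < 1"
  shows "((\<lambda>s. rfac (y + s *\<^sub>R \<xi>)) has_real_derivative rfd y \<xi>) (at 0)"
  using rfac_deriv0[of "y$5" "\<xi>$5"] assms by (simp add: rfac_def rfd_def)

definition Vr :: "nat \<Rightarrow> real^5 \<Rightarrow> real^5" where
  "Vr k x =
     (if k = 1 then vector [-(x$2), x$1, -(x$4), x$3, 0]
      else if k = 2 then vector [-(x$3), x$4, x$1, -(x$2), 0]
      else if k = 3 then vector [-(x$4), -(x$3), x$2, x$1, 0]
      else if k = 4 then vector [-(x$1) * x$5, -(x$2) * x$5, -(x$3) * x$5, -(x$4) * x$5, 1 - (x$5)\<^sup>2]
      else 0)"

definition Vd :: "nat \<Rightarrow> real^5 \<Rightarrow> real^5 \<Rightarrow> real^5" where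
  "Vd k x \<xi> =
     (if k = 1 then vector [-(\<xi>$2), \<xi>$1, -(\<xi>$4), \<xi>$3, 0]
      else if k = 2 then vector [-(\<xi>$3), \<xi>$4, \<xi>$1, -(\<xi>$2), 0]
      else if k = 3 then vector [-(\<xi>$4), -(\<xi>$3), \<xi>$2, \<xi>$1, 0]
      else if k = 4 then vector [-(\<xi>$1 * x$5 + x$1 * \<xi>$5), -(\<xi>$2 * x$5 + x$2 * \<xi>$5),
          -(\<xi>$3 * x$5 + x$3 * \<xi>$5), -(\<xi>$4 * x$5 + x$4 * \<xi>$5), - (2 * x$5 * \<xi>$5)]
      else 0)"

lemma frame_Vr: "frame k x = rfac x *\<^sub>R Vr k x"
  by (simp add: frame_def Vr_def rfac_def)

lemma Vr_hvd: "((\<lambda>s. Vr k (y + s *\<^sub>R \<xi>)) has_vector_derivative Vd k y \<xi>) (at 0)"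
proof -
  consider "k = 1" | "k = 2" | "k = 3" | "k = 4" | "k \<notin> {1,2,3,4}" by blast
  then show ?thesis
  proof cases
    case 1 then show ?thesis unfolding Vr_def Vd_def
      by (simp, intro vec5_hvd) (auto intro!: derivative_eq_intros)
  next
    case 2 then show ?thesis unfolding Vr_def Vd_def
      by (simp, intro vec5_hvd) (auto intro!: derivative_eq_intros)
  next
    case 3 then show ?thesis unfolding Vr_def Vd_def
      by (simp, intro vec5_hvd) (auto intro!: derivative_eq_intros)
  next
    case 4 then show ?thesis unfolding Vr_def Vd_def
      by (simp, intro vec5_hvd) (auto intro!: derivative_eq_intros)
  next
    case 5 then show ?thesis unfolding Vr_def Vd_def by simp
  qed
qed

lemma frame_hvd:
  assumes "(y$5)\<^sup>2 < 1"
  shows "((\<lambda>s. frame k (y + s *\<^sub>R \<xi>)) has_vector_derivative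
      (rfac y *\<^sub>R Vd k y \<xi> + rfd y \<xi> *\<^sub>R Vr k y)) (at 0)"
proof -
  have "((\<lambda>s. rfac (y + s *\<^sub>R \<xi>) *\<^sub>R Vr k (y + s *\<^sub>R \<xi>)) has_vector_derivative
      (rfac (y + 0 *\<^sub>R \<xi>) *\<^sub>R Vd k y \<xi> + rfd y \<xi> *\<^sub>R Vr k (y + 0 *\<^sub>R \<xi>))) (at 0)"
    by (rule has_vector_derivative_scaleR[OF rfac_deriv[OF assms] Vr_hvd])
  then show ?thesis by (simp add: frame_Vr)
qed

lemma Dframe_eq:
  assumes "(y$5)\<^sup>2 < 1"
  shows "Dframe k y \<xi> = rfac y *\<^sub>R Vd k y \<xi> + rfd y \<xi> *\<^sub>R Vr k y"
  unfolding Dframe_def by (rule vector_derivative_at[OF frame_hvd[OF assms]])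

context
  fixes x1 x5 :: real
  assumes x1p: "x1 > 0" and cs: "x1\<^sup>2 + x5\<^sup>2 = 1"
begin

definition "y0 = (vector [x1,0,0,0,x5] :: real^5)"

lemma fr0: "frame 1 y0 = vector [0,1,0,0,0]" "frame (Suc 0) y0 = vector [0,1,0,0,0]"
        "frame 2 y0 = vector [0,0,1,0,0]"
        "frame 3 y0 = vector [0,0,0,1,0]" "frame 4 y0 = vector [-x5,0,0,0,x1]"
  using frame_y0[OF x1p cs] by (simp_all add: y0_def)

lemma y0c [simp]: "y0$1 = x1" "y0$2 = 0" "y0$3 = 0" "y0$4 = 0" "y0$5 = x5"
  by (simp_all add: y0_def)

lemma q: "x1*x1 + x5*x5 = 1" "x5*x5 + x1*x1 = 1" "- (x5*x5) - x1*x1 = -1" "- (x1*x1) - x5*x5 = -1"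
  using cs by (simp_all add: power2_eq_square)

lemma y05: "(y0$5)\<^sup>2 < 1"
proof -
  have "x1\<^sup>2 > 0" using x1p by simp
  then show ?thesis using cs by (simp only: y0c)
qed

lemma rfac0: "rfac y0 = 1 / x1"
  using sqrt_x1[OF x1p cs] by (simp add: rfac_def y0_def)

lemma rfd0: "rfd y0 \<xi> = x5 * \<xi>$5 / (x1 * x1\<^sup>2)"
proof -
  have "1 - x5\<^sup>2 = x1\<^sup>2" using cs by simp
  then show ?thesis using sqrt_x1[OF x1p cs] by (simp add: rfd_def y0_def)
qed

lemma theta0: "theta m k y0 \<xi> = frame m y0 \<bullet> (rfac y0 *\<^sub>R Vd k y0 \<xi> + rfd y0 \<xi> *\<^sub>R Vr k y0)"
  by (simp add: theta_def Dframe_eq[OF y05])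

lemma gam11: 
  assumes t: "x1 * \<xi>$1 + x5 * \<xi>$5 = 0"
  shows "gam 1 1 y0 \<xi> = 0"
proof -
  have t': "\<xi>$1 = - (x5 * \<xi>$5) / x1" using t x1p by (simp add: field_simps)
  show ?thesis
  unfolding gam_def nom_def sum4 theta0
  using x1p apply (simp add: fr0 om_def cof2_def cof_def inner5 rfac0 rfd0 Vd_def Vr_def q t')
  apply (simp add: field_simps power2_eq_square q)?
  using cs apply (simp add: power2_eq_square)?
  apply algebra?
  done
qed

lemma gam22: 
  assumes t: "x1 * \<xi>$1 + x5 * \<xi>$5 = 0"
  shows "gam 2 2 y0 \<xi> = 0"
proof -
  have t': "\<xi>$1 = - (x5 * \<xi>$5) / x1" using t x1p by (simp add: field_simps)
  show ?thesis
  unfolding gam_def nom_def sum4 theta0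
  using x1p apply (simp add: fr0 om_def cof2_def cof_def inner5 rfac0 rfd0 Vd_def Vr_def q t')
  apply (simp add: field_simps power2_eq_square q)?
  using cs apply (simp add: power2_eq_square)?
  apply algebra?
  done
qed

lemma gam33: 
  assumes t: "x1 * \<xi>$1 + x5 * \<xi>$5 = 0"
  shows "gam 3 3 y0 \<xi> = 0"
proof -
  have t': "\<xi>$1 = - (x5 * \<xi>$5) / x1" using t x1p by (simp add: field_simps)
  show ?thesis
  unfolding gam_def nom_def sum4 theta0
  using x1p apply (simp add: fr0 om_def cof2_def cof_def inner5 rfac0 rfd0 Vd_def Vr_def q t')
  apply (simp add: field_simps power2_eq_square q)?
  using cs apply (simp add: power2_eq_square)?
  apply algebra?
  done
qed

lemma gam12: 
  assumes t: "x1 * \<xi>$1 + x5 * \<xi>$5 = 0"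
  shows "gam 1 2 y0 \<xi> = - ((1 + x5) / x1 * \<xi>$2)"
proof -
  have t': "\<xi>$1 = - (x5 * \<xi>$5) / x1" using t x1p by (simp add: field_simps)
  show ?thesis
  unfolding gam_def nom_def sum4 theta0
  using x1p apply (simp add: fr0 om_def cof2_def cof_def inner5 rfac0 rfd0 Vd_def Vr_def q t')
  apply (simp add: field_simps power2_eq_square q)?
  using cs apply (simp add: power2_eq_square)?
  apply algebra?
  done
qed

lemma gam21: 
  assumes t: "x1 * \<xi>$1 + x5 * \<xi>$5 = 0"
  shows "gam 2 1 y0 \<xi> = (1 + x5) / x1 * \<xi>$2"
proof -
  have t': "\<xi>$1 = - (x5 * \<xi>$5) / x1" using t x1p by (simp add: field_simps)
  show ?thesis
  unfolding gam_def nom_def sum4 theta0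
  using x1p apply (simp add: fr0 om_def cof2_def cof_def inner5 rfac0 rfd0 Vd_def Vr_def q t')
  apply (simp add: field_simps power2_eq_square q)?
  using cs apply (simp add: power2_eq_square)?
  apply algebra?
  done
qed

lemma gam13: 
  assumes t: "x1 * \<xi>$1 + x5 * \<xi>$5 = 0"
  shows "gam 1 3 y0 \<xi> = (1 + x5) / x1 * \<xi>$3"
proof -
  have t': "\<xi>$1 = - (x5 * \<xi>$5) / x1" using t x1p by (simp add: field_simps)
  show ?thesis
  unfolding gam_def nom_def sum4 theta0
  using x1p apply (simp add: fr0 om_def cof2_def cof_def inner5 rfac0 rfd0 Vd_def Vr_def q t')
  apply (simp add: field_simps power2_eq_square q)?
  using cs apply (simp add: power2_eq_square)?
  apply algebra?
  done
qed

lemma gam31: 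
  assumes t: "x1 * \<xi>$1 + x5 * \<xi>$5 = 0"
  shows "gam 3 1 y0 \<xi> = - ((1 + x5) / x1 * \<xi>$3)"
proof -
  have t': "\<xi>$1 = - (x5 * \<xi>$5) / x1" using t x1p by (simp add: field_simps)
  show ?thesis
  unfolding gam_def nom_def sum4 theta0
  using x1p apply (simp add: fr0 om_def cof2_def cof_def inner5 rfac0 rfd0 Vd_def Vr_def q t')
  apply (simp add: field_simps power2_eq_square q)?
  using cs apply (simp add: power2_eq_square)?
  apply algebra?
  done
qed

lemma gam23: 
  assumes t: "x1 * \<xi>$1 + x5 * \<xi>$5 = 0"
  shows "gam 2 3 y0 \<xi> = (1 + x5) / x1 * \<xi>$4"
proof -
  have t': "\<xi>$1 = - (x5 * \<xi>$5) / x1" using t x1p by (simp add: field_simps)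
  show ?thesis
  unfolding gam_def nom_def sum4 theta0
  using x1p apply (simp add: fr0 om_def cof2_def cof_def inner5 rfac0 rfd0 Vd_def Vr_def q t')
  apply (simp add: field_simps power2_eq_square q)?
  using cs apply (simp add: power2_eq_square)?
  apply algebra?
  done
qed

lemma gam32: 
  assumes t: "x1 * \<xi>$1 + x5 * \<xi>$5 = 0"
  shows "gam 3 2 y0 \<xi> = - ((1 + x5) / x1 * \<xi>$4)"
proof -
  have t': "\<xi>$1 = - (x5 * \<xi>$5) / x1" using t x1p by (simp add: field_simps)
  show ?thesis
  unfolding gam_def nom_def sum4 theta0
  using x1p apply (simp add: fr0 om_def cof2_def cof_def inner5 rfac0 rfd0 Vd_def Vr_def q t')
  apply (simp add: field_simps power2_eq_square q)?
  using cs apply (simp add: power2_eq_square)?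
  apply algebra?
  done
qed

end

definition det3 :: "real \<Rightarrow> real \<Rightarrow> real \<Rightarrow> real \<Rightarrow> real \<Rightarrow> real \<Rightarrow> real \<Rightarrow> real \<Rightarrow> real \<Rightarrow> real" where
  "det3 a b c d e f g h i = a * (e * i - f * h) - b * (d * i - f * g) + c * (d * h - e * g)"

context
  fixes x1 x5 :: real
  assumes x1p: "x1 > 0" and cs: "x1\<^sup>2 + x5\<^sup>2 = 1"
begin

lemma bformV:
  assumes t: "x1 * p + x5 * q = 0"
  shows "bform 1 (y0 x1 x5, a) (vector [p, x1*w1, x1*w2, x1*w3, q], \<alpha>) = \<alpha>$1 + (1+x5)*(a$2*w1 - a$3*w2)"
        "bform 2 (y0 x1 x5, a) (vector [p, x1*w1, x1*w2, x1*w3, q], \<alpha>) = \<alpha>$2 + (1+x5)*(- a$1*w1 - a$3*w3)"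
        "bform 3 (y0 x1 x5, a) (vector [p, x1*w1, x1*w2, x1*w3, q], \<alpha>) = \<alpha>$3 + (1+x5)*(a$1*w2 + a$2*w3)"
proof -
  let ?\<xi> = "vector [p, x1*w1, x1*w2, x1*w3, q] :: real^5"
  have tt: "x1 * ?\<xi>$1 + x5 * ?\<xi>$5 = 0" using t by simp
  note g = gam11[OF x1p cs tt] gam12[OF x1p cs tt] gam13[OF x1p cs tt]
           gam21[OF x1p cs tt] gam22[OF x1p cs tt] gam23[OF x1p cs tt]
           gam31[OF x1p cs tt] gam32[OF x1p cs tt] gam33[OF x1p cs tt]
  have o: "of_nat 1 = (1::3)" "of_nat 2 = (2::3)" "of_nat 3 = (3::3)" by simp_all
  show "bform 1 (y0 x1 x5, a) (?\<xi>, \<alpha>) = \<alpha>$1 + (1+x5)*(a$2*w1 - a$3*w2)"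
    unfolding bform_def sum3 using x1p by (simp add: g g[unfolded One_nat_def] fc_def o) (simp add: field_simps)
  show "bform 2 (y0 x1 x5, a) (?\<xi>, \<alpha>) = \<alpha>$2 + (1+x5)*(- a$1*w1 - a$3*w3)"
    unfolding bform_def sum3 using x1p by (simp add: g g[unfolded One_nat_def] fc_def o) (simp add: field_simps)
  show "bform 3 (y0 x1 x5, a) (?\<xi>, \<alpha>) = \<alpha>$3 + (1+x5)*(a$1*w2 + a$2*w3)"
    unfolding bform_def sum3 using x1p by (simp add: g g[unfolded One_nat_def] fc_def o) (simp add: field_simps)
qed

lemma cofV:
  "cof 1 (y0 x1 x5) (vector [p, x1*w1, x1*w2, x1*w3, q]) = x1 * w1"
  "cof 2 (y0 x1 x5) (vector [p, x1*w1, x1*w2, x1*w3, q]) = x1 * w2"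
  "cof 3 (y0 x1 x5) (vector [p, x1*w1, x1*w2, x1*w3, q]) = x1 * w3"
  "cof 4 (y0 x1 x5) (vector [p, x1*w1, x1*w2, x1*w3, q]) = - x5 * p + x1 * q"
  by (simp_all add: cof_def fr0[OF x1p cs] inner5)


lemma phi_parts:
  fixes d1 d5 tU tV tW uU1 uU2 uU3 uV1 uV2 uV3 uW1 uW2 uW3 :: real and A a :: "real^3"
  assumes td: "x1 * d1 + x5 * d5 = 0"
  defines "U \<equiv> (vector [tU*d1, x1*uU1, x1*uU2, x1*uU3, tU*d5], tU *\<^sub>R A) :: tpt"
      and "V \<equiv> (vector [tV*d1, x1*uV1, x1*uV2, x1*uV3, tV*d5], tV *\<^sub>R A) :: tpt"
      and "W \<equiv> (vector [tW*d1, x1*uW1, x1*uW2, x1*uW3, tW*d5], tW *\<^sub>R A) :: tpt"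
      and "c \<equiv> - x5 * d1 + x1 * d5"
      and "m12 \<equiv> det3 uU1 uU2 tU uV1 uV2 tV uW1 uW2 tW"
      and "m13 \<equiv> det3 uU1 uU3 tU uV1 uV3 tV uW1 uW3 tW"
      and "m23 \<equiv> det3 uU2 uU3 tU uV2 uV3 tV uW2 uW3 tW"
  shows "(\<Sum>i\<in>{1..3}. wedge12 (bform i (y0 x1 x5, a)) (piom i (y0 x1 x5, a)) U V W)
          = x1\<^sup>2 * (A$1 * m12 + A$2 * m13 - A$3 * m23) - 2 * (1 + x5) * x1 * c * (a$1 * m12 + a$2 * m13 - a$3 * m23)"
    and "wedge111 (bform 1 (y0 x1 x5, a)) (bform 2 (y0 x1 x5, a)) (bform 3 (y0 x1 x5, a)) U V W
          = (1 + x5)\<^sup>2 * (a$1*A$1 + a$2*A$2 + a$3*A$3) * (- a$1 * m12 - a$2 * m13 + a$3 * m23)"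
proof -
  have tU: "x1 * (tU*d1) + x5 * (tU*d5) = 0" using td by (metis distrib_left mult.left_commute mult_zero_right)
  have tV: "x1 * (tV*d1) + x5 * (tV*d5) = 0" using td by (metis distrib_left mult.left_commute mult_zero_right)
  have tW: "x1 * (tW*d1) + x5 * (tW*d5) = 0" using td by (metis distrib_left mult.left_commute mult_zero_right)
  note b = bformV[OF tU] bformV[OF tV] bformV[OF tW]
  note cv = cofV
  show "(\<Sum>i\<in>{1..3}. wedge12 (bform i (y0 x1 x5, a)) (piom i (y0 x1 x5, a)) U V W)
          = x1\<^sup>2 * (A$1 * m12 + A$2 * m13 - A$3 * m23) - 2 * (1 + x5) * x1 * c * (a$1 * m12 + a$2 * m13 - a$3 * m23)"
    unfolding sum3 wedge12_def piom_def U_def V_def W_def fst_conv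
    unfolding b[unfolded One_nat_def] b om_def cof2_def cv c_def m12_def m13_def m23_def det3_def
    apply (simp add: vector_scaleR_component)
    by algebra
  show "wedge111 (bform 1 (y0 x1 x5, a)) (bform 2 (y0 x1 x5, a)) (bform 3 (y0 x1 x5, a)) U V W
          = (1 + x5)\<^sup>2 * (a$1*A$1 + a$2*A$2 + a$3*A$3) * (- a$1 * m12 - a$2 * m13 + a$3 * m23)"
    unfolding wedge111_def U_def V_def W_def
    unfolding b m12_def m13_def m23_def det3_def
    apply (simp add: vector_scaleR_component)
    by algebra
qed

end

lemma Vr_equiv: "Vr k (su2R5 al be y) = su2R5 al be (Vr k y)"
  unfolding Vr_def by (simp add: su2R5_comp vec5_eq algebra_simps)

lemma Vd_equiv: "Vd k (su2R5 al be y) (su2R5 al be \<xi>) = su2R5 al be (Vd k y \<xi>)"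
  unfolding Vd_def by (simp add: su2R5_comp vec5_eq algebra_simps)

lemma rfac_equiv: "rfac (su2R5 al be y) = rfac y"
  by (simp add: rfac_def)

lemma rfd_equiv: "rfd (su2R5 al be y) (su2R5 al be \<xi>) = rfd y \<xi>"
  by (simp add: rfd_def)

lemma Dframe_equiv:
  assumes "(y$5)\<^sup>2 < 1"
  shows "Dframe k (su2R5 al be y) (su2R5 al be \<xi>) = su2R5 al be (Dframe k y \<xi>)"
proof -
  have "((su2R5 al be y)$5)\<^sup>2 < 1" using assms by simp
  then show ?thesis
    by (simp add: Dframe_eq assms Vr_equiv Vd_equiv rfac_equiv rfd_equiv su2R5_add su2R5_scaleR)
qed

context
  fixes al be :: complex
  assumes u: "(cmod al)\<^sup>2 + (cmod be)\<^sup>2 = 1"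
begin

lemma theta_inv:
  assumes "(y$5)\<^sup>2 < 1"
  shows "theta m k (su2R5 al be y) (su2R5 al be \<xi>) = theta m k y \<xi>"
  by (simp add: theta_def Dframe_equiv[OF assms] frame_equiv su2R5_inner[OF u])

lemma gam_inv:
  assumes "(y$5)\<^sup>2 < 1"
  shows "gam j i (su2R5 al be y) (su2R5 al be \<xi>) = gam j i y \<xi>"
  by (simp add: gam_def nom_def theta_inv[OF assms] frame_equiv om_inv[OF u])

lemma bform_inv:
  assumes "(y$5)\<^sup>2 < 1"
  shows "bform i (su2R5 al be y, a) (su2R5 al be \<xi>, \<alpha>) = bform i (y, a) (\<xi>, \<alpha>)"
  by (simp add: bform_def gam_inv[OF assms])

lemma piom_inv:
  shows "piom i (su2R5 al be y, a) (su2R5 al be \<xi>, \<alpha>) (su2R5 al be \<eta>, \<beta>) = piom i (y, a) (\<xi>, \<alpha>) (\<eta>, \<beta>)"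
  by (simp add: piom_def om_inv[OF u])

lemma phi_inv:
  assumes "(y$5)\<^sup>2 < 1"
  shows "phiBS lam (su2R5 al be y, a) (su2R5 al be \<xi>1, \<alpha>1) (su2R5 al be \<xi>2, \<alpha>2) (su2R5 al be \<xi>3, \<alpha>3)
       = phiBS lam (y, a) (\<xi>1, \<alpha>1) (\<xi>2, \<alpha>2) (\<xi>3, \<alpha>3)"
  by (simp add: phiBS_def wedge12_def wedge111_def bform_inv[OF assms] piom_inv)

end

lemma su2R5_y0: "su2R5 al be (vector [x1,0,0,0,x5]) = vector [Re al * x1, Im al * x1, Re be * x1, Im be * x1, x5]"
  by (simp add: su2R5_comp vec5_eq)

lemma curve_deriv:
  fixes x1f x5f a1f a2f a3f \<tau> :: "real \<Rightarrow> real" and ga gb :: "real \<Rightarrow> complex"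
  assumes "ga 0 = al" "gb 0 = be" "\<tau> 0 = t"
    and dA: "(ga has_vector_derivative A) (at 0)" and dB: "(gb has_vector_derivative B) (at 0)"
    and dt: "(\<tau> has_real_derivative \<tau>d) (at 0)"
    and d1: "(x1f has_real_derivative d1) (at t)" and d5: "(x5f has_real_derivative d5) (at t)"
    and e1: "(a1f has_real_derivative e1) (at t)" and e2: "(a2f has_real_derivative e2) (at t)"
    and e3: "(a3f has_real_derivative e3) (at t)"
    and pts: "\<forall>s. x1f (\<tau> s) > 0 \<and> (x1f (\<tau> s))\<^sup>2 + (x5f (\<tau> s))\<^sup>2 = 1 \<and> (cmod (ga s))\<^sup>2 + (cmod (gb s))\<^sup>2 = 1"
  shows "((\<lambda>s. su2lift (ga s) (gb s) (vector [x1f (\<tau> s),0,0,0,x5f (\<tau> s)], vector [a1f (\<tau> s), a2f (\<tau> s), a3f (\<tau> s)]))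
     has_vector_derivative
      (vector [Re A * x1f t + Re al * (d1 * \<tau>d), Im A * x1f t + Im al * (d1 * \<tau>d),
               Re B * x1f t + Re be * (d1 * \<tau>d), Im B * x1f t + Im be * (d1 * \<tau>d), d5 * \<tau>d],
       vector [e1 * \<tau>d, e2 * \<tau>d, e3 * \<tau>d])) (at 0)"
proof -
  have eq: "(\<lambda>s. su2lift (ga s) (gb s) (vector [x1f (\<tau> s),0,0,0,x5f (\<tau> s)], vector [a1f (\<tau> s), a2f (\<tau> s), a3f (\<tau> s)]))
    = (\<lambda>s. (vector [Re (ga s) * x1f (\<tau> s), Im (ga s) * x1f (\<tau> s), Re (gb s) * x1f (\<tau> s), Im (gb s) * x1f (\<tau> s), x5f (\<tau> s)],
             vector [a1f (\<tau> s), a2f (\<tau> s), a3f (\<tau> s)]))"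
    using pts by (simp add: fun_eq_iff su2lift_y0 su2R5_y0)
  have c1: "((\<lambda>s. x1f (\<tau> s)) has_real_derivative d1 * \<tau>d) (at 0)"
    using DERIV_chain2[OF _ dt, of x1f d1] d1 assms(3) by simp
  have c5: "((\<lambda>s. x5f (\<tau> s)) has_real_derivative d5 * \<tau>d) (at 0)"
    using DERIV_chain2[OF _ dt, of x5f d5] d5 assms(3) by simp
  have ca1: "((\<lambda>s. a1f (\<tau> s)) has_real_derivative e1 * \<tau>d) (at 0)"
    using DERIV_chain2[OF _ dt, of a1f e1] e1 assms(3) by simp
  have ca2: "((\<lambda>s. a2f (\<tau> s)) has_real_derivative e2 * \<tau>d) (at 0)"
    using DERIV_chain2[OF _ dt, of a2f e2] e2 assms(3) by simp
  have ca3: "((\<lambda>s. a3f (\<tau> s)) has_real_derivative e3 * \<tau>d) (at 0)"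
    using DERIV_chain2[OF _ dt, of a3f e3] e3 assms(3) by simp
  have rA: "((\<lambda>s. Re (ga s)) has_real_derivative Re A) (at 0)" using has_field_derivative_Re[OF dA] .
  have iA: "((\<lambda>s. Im (ga s)) has_real_derivative Im A) (at 0)" using has_field_derivative_Im[OF dA] .
  have rB: "((\<lambda>s. Re (gb s)) has_real_derivative Re B) (at 0)" using has_field_derivative_Re[OF dB] .
  have iB: "((\<lambda>s. Im (gb s)) has_real_derivative Im B) (at 0)" using has_field_derivative_Im[OF dB] .
  have x: "x1f (\<tau> 0) = x1f t" using assms(3) by simp
  have "((\<lambda>s. (vector [Re (ga s) * x1f (\<tau> s), Im (ga s) * x1f (\<tau> s), Re (gb s) * x1f (\<tau> s), Im (gb s) * x1f (\<tau> s), x5f (\<tau> s)] :: real^5,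
             vector [a1f (\<tau> s), a2f (\<tau> s), a3f (\<tau> s)] :: real^3)) has_vector_derivative
       (vector [Re A * x1f (\<tau> 0) + d1 * \<tau>d * Re (ga 0), Im A * x1f (\<tau> 0) + d1 * \<tau>d * Im (ga 0),
                Re B * x1f (\<tau> 0) + d1 * \<tau>d * Re (gb 0), Im B * x1f (\<tau> 0) + d1 * \<tau>d * Im (gb 0), d5 * \<tau>d],
        vector [e1 * \<tau>d, e2 * \<tau>d, e3 * \<tau>d])) (at 0)"
    apply (rule has_vector_derivative_Pair)
     apply (rule vec5_hvd)
         apply (rule DERIV_mult rA iA rB iB c1 c5)+
    apply (rule vec3_hvd)
      apply (rule ca1 ca2 ca3)+
    done
  then show ?thesis unfolding eq using assms(1,2,3) by (simp add: algebra_simps)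
qed

lemma unit_deriv:
  fixes ga gb :: "real \<Rightarrow> complex"
  assumes "ga 0 = al" "gb 0 = be"
    and dA: "(ga has_vector_derivative A) (at 0)" and dB: "(gb has_vector_derivative B) (at 0)"
    and u: "\<forall>s. (cmod (ga s))\<^sup>2 + (cmod (gb s))\<^sup>2 = 1"
  shows "Re al * Re A + Im al * Im A + Re be * Re B + Im be * Im B = 0"
proof -
  have rA: "((\<lambda>s. Re (ga s)) has_real_derivative Re A) (at 0)" using has_field_derivative_Re[OF dA] .
  have iA: "((\<lambda>s. Im (ga s)) has_real_derivative Im A) (at 0)" using has_field_derivative_Im[OF dA] .
  have rB: "((\<lambda>s. Re (gb s)) has_real_derivative Re B) (at 0)" using has_field_derivative_Re[OF dB] .
  have iB: "((\<lambda>s. Im (gb s)) has_real_derivative Im B) (at 0)" using has_field_derivative_Im[OF dB] .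
  have "((\<lambda>s. Re (ga s) * Re (ga s) + Im (ga s) * Im (ga s) + Re (gb s) * Re (gb s) + Im (gb s) * Im (gb s))
     has_real_derivative
     (Re A * Re (ga 0) + Re A * Re (ga 0) + (Im A * Im (ga 0) + Im A * Im (ga 0))
      + (Re B * Re (gb 0) + Re B * Re (gb 0)) + (Im B * Im (gb 0) + Im B * Im (gb 0)))) (at 0)"
    by (intro DERIV_add DERIV_mult rA iA rB iB)
  moreover have "(\<lambda>s. Re (ga s) * Re (ga s) + Im (ga s) * Im (ga s) + Re (gb s) * Re (gb s) + Im (gb s) * Im (gb s)) = (\<lambda>s. 1)"
  proof
    fix s
    have "Re (ga s) * Re (ga s) + Im (ga s) * Im (ga s) + Re (gb s) * Re (gb s) + Im (gb s) * Im (gb s)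
      = (cmod (ga s))\<^sup>2 + (cmod (gb s))\<^sup>2" unfolding cmod_power2 by (simp add: power2_eq_square)
    then show "Re (ga s) * Re (ga s) + Im (ga s) * Im (ga s) + Re (gb s) * Re (gb s) + Im (gb s) * Im (gb s) = 1"
      using u by simp
  qed
  ultimately have "((\<lambda>s. 1) has_real_derivative
     (Re A * Re (ga 0) + Re A * Re (ga 0) + (Im A * Im (ga 0) + Im A * Im (ga 0))
      + (Re B * Re (gb 0) + Re B * Re (gb 0)) + (Im B * Im (gb 0) + Im B * Im (gb 0)))) (at 0)" by simp
  then have "Re A * Re (ga 0) + Re A * Re (ga 0) + (Im A * Im (ga 0) + Im A * Im (ga 0))
      + (Re B * Re (gb 0) + Re B * Re (gb 0)) + (Im B * Im (gb 0) + Im B * Im (gb 0)) = 0"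
    using DERIV_unique[OF _ DERIV_const] by blast
  then show ?thesis using assms(1,2) by (simp add: algebra_simps)
qed

lemma decomp:
  assumes u: "(cmod al)\<^sup>2 + (cmod be)\<^sup>2 = 1"
    and c: "Re al * Re A + Im al * Im A + Re be * Re B + Im be * Im B = 0"
  shows "vector [Re A * x1 + Re al * p, Im A * x1 + Im al * p,
               Re B * x1 + Re be * p, Im B * x1 + Im be * p, q]
    = su2R5 al be (vector [p, x1 * Im (cnj al * A + cnj be * B), x1 * Re (al * B - be * A), x1 * Im (al * B - be * A), q])"
proof -
  have n: "(Re al)\<^sup>2 + (Im al)\<^sup>2 + (Re be)\<^sup>2 + (Im be)\<^sup>2 = 1" using unit_alg[OF u] .
  show ?thesis
    apply (simp add: su2R5_comp vec5_eq)
    using n c by algebra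
qed

lemma smooth_deriv: "smooth_on I f \<Longrightarrow> t \<in> I \<Longrightarrow> (f has_real_derivative deriv f t) (at t)"
  unfolding smooth_on_def by (metis DERIV_deriv_iff_real_differentiable funpow_0)

definition Qf :: "real \<Rightarrow> real \<Rightarrow> real \<Rightarrow> real \<Rightarrow> real^3 \<Rightarrow> real^3 \<Rightarrow> 3 \<Rightarrow> real" where
  "Qf s x1 x5 c a A i = 2 * s * (x1\<^sup>2 * A$i - 2 * (1 + x5) * x1 * c * a$i)
      - (1 / s ^ 3) * ((1 + x5)\<^sup>2 * (a$1*A$1 + a$2*A$2 + a$3*A$3) * a$i)"

lemma Qrel:
  fixes s L x1 x5 d1 d5 Ai ai P :: real
  assumes sp: "s > 0" and L: "L = s^4" and x5p: "1 + x5 > 0" and cs: "x1\<^sup>2 + x5\<^sup>2 = 1"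
    and td: "x1 * d1 + x5 * d5 = 0"
  shows "s^3 * (2 * s * (x1\<^sup>2 * Ai - 2 * (1 + x5) * x1 * (- x5 * d1 + x1 * d5) * ai) - 1 / s^3 * ((1 + x5)\<^sup>2 * P * ai))
     = (4 * Ai * ((1 - x5) / (1 + x5)) - ai * (2 * P / L + 8 * d5 / (1 + x5))) * (L * (1 + x5)\<^sup>2 / 2)"
proof -
  have x1c: "x1 * (- x5 * d1 + x1 * d5) = d5" using td cs by algebra
  have Lp: "L \<noteq> 0" using L sp by simp
  have x5n: "1 + x5 \<noteq> 0" using x5p by simp
  have s3: "s^3 * (1 / s^3) = 1" using sp by simp
  have s4: "s^3 * s = L" using L by (simp add: eval_nat_numeral)
  have "s^3 * (2 * s * (x1\<^sup>2 * Ai - 2 * (1 + x5) * x1 * (- x5 * d1 + x1 * d5) * ai) - 1 / s^3 * ((1 + x5)\<^sup>2 * P * ai))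
     = 2 * (s^3 * s) * (x1\<^sup>2 * Ai - 2 * (1 + x5) * (x1 * (- x5 * d1 + x1 * d5)) * ai) - (s^3 * (1 / s^3)) * ((1 + x5)\<^sup>2 * P * ai)"
    by (simp add: algebra_simps)
  also have "\<dots> = 2 * L * (x1\<^sup>2 * Ai - 2 * (1 + x5) * d5 * ai) - (1 + x5)\<^sup>2 * P * ai"
    unfolding x1c s3 s4 by simp
  also have "\<dots> = 2 * L * ((1 - x5) * (1 + x5) * Ai - 2 * (1 + x5) * d5 * ai) - (1 + x5)\<^sup>2 * P * ai"
  proof -
    have "x1\<^sup>2 = (1 - x5) * (1 + x5)" using cs by (simp add: algebra_simps power2_eq_square)
    then show ?thesis by simp
  qed
  also have "\<dots> = (4 * Ai * ((1 - x5) / (1 + x5)) - ai * (2 * P / L + 8 * d5 / (1 + x5))) * (L * (1 + x5)\<^sup>2 / 2)"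
  proof -
    have t1: "4 * Ai * ((1 - x5)/(1 + x5)) * (L*(1+x5)\<^sup>2/2) = 2*L*((1-x5)*(1+x5)*Ai)"
      using x5n by (simp add: field_simps power2_eq_square)
    have t2: "(2*P/L) * (L*(1+x5)\<^sup>2/2) = (1+x5)\<^sup>2*P" using Lp by (simp add: field_simps)
    have t3: "(8*d5/(1+x5)) * (L*(1+x5)\<^sup>2/2) = 2*L*(2*(1+x5)*d5)" using x5n by (simp add: field_simps power2_eq_square)
    have "(4 * Ai * ((1 - x5) / (1 + x5)) - ai * (2 * P / L + 8 * d5 / (1 + x5))) * (L * (1 + x5)\<^sup>2 / 2)
      = 4 * Ai * ((1 - x5)/(1 + x5)) * (L*(1+x5)\<^sup>2/2) - ai * ((2*P/L) * (L*(1+x5)\<^sup>2/2) + (8*d5/(1+x5)) * (L*(1+x5)\<^sup>2/2))"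
      by (simp only: left_diff_distrib distrib_right mult.assoc)
    also have "\<dots> = 2*L*((1-x5)*(1+x5)*Ai) - ai * ((1+x5)\<^sup>2*P + 2*L*(2*(1+x5)*d5))" unfolding t1 t2 t3 ..
    finally show ?thesis by (simp add: algebra_simps)
  qed
  finally show ?thesis .
qed


lemma slam_pos: "lam > 0 \<Longrightarrow> slam lam (vector [b1, b2, b3]) > 0"
proof -
  assume l: "lam > 0"
  have "lam + rsq (vector [b1, b2, b3]) > 0" unfolding rsq_def sum3 fc_def using l by (simp add: add_pos_nonneg)
  then show ?thesis unfolding slam_def by simp
qed

lemma slam_4: "lam > 0 \<Longrightarrow> (slam lam (vector [b1, b2, b3]))^4 = lam + (b1\<^sup>2 + b2\<^sup>2 + b3\<^sup>2)"
proof -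
  assume l: "lam > 0"
  have r: "rsq (vector [b1, b2, b3]) = b1\<^sup>2 + b2\<^sup>2 + b3\<^sup>2" unfolding rsq_def sum3 fc_def by simp
  define L where "L = lam + (b1\<^sup>2 + b2\<^sup>2 + b3\<^sup>2)"
  have Lp: "L > 0" unfolding L_def using l by (simp add: add_pos_nonneg)
  have "(L powr (1/4)) ^ 4 = (L powr (1/4)) powr (real 4)"
    using Lp by (simp add: powr_realpow)
  also have "\<dots> = L" using Lp by (simp add: powr_powr)
  finally have "(L powr (1/4)) ^ 4 = L" .
  then show ?thesis unfolding slam_def r L_def .
qed

lemma dlog0:
  fixes a1 a2 a3 x5 :: "real \<Rightarrow> real"
  assumes d1: "(a1 has_real_derivative e1) (at t)" and d2: "(a2 has_real_derivative e2) (at t)"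
    and d3: "(a3 has_real_derivative e3) (at t)" and d5: "(x5 has_real_derivative e5) (at t)"
    and Lp: "lam + ((a1 t)\<^sup>2 + (a2 t)\<^sup>2 + (a3 t)\<^sup>2) > 0" and x5p: "1 + x5 t > 0"
  shows "((\<lambda>s. ln (lam + ((a1 s)\<^sup>2 + (a2 s)\<^sup>2 + (a3 s)\<^sup>2)) + 8 * ln (1 + x5 s)) has_real_derivative
    2 * (a1 t * e1 + a2 t * e2 + a3 t * e3) / (lam + ((a1 t)\<^sup>2 + (a2 t)\<^sup>2 + (a3 t)\<^sup>2))
      + 8 * e5 / (1 + x5 t)) (at t)"
proof -
  have r: "((\<lambda>s. lam + ((a1 s)\<^sup>2 + (a2 s)\<^sup>2 + (a3 s)\<^sup>2)) has_real_derivative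
     0 + (2 * a1 t * e1 + 2 * a2 t * e2 + 2 * a3 t * e3)) (at t)"
    unfolding power2_eq_square
    by (intro DERIV_add DERIV_const) (use DERIV_mult[OF d1 d1] DERIV_mult[OF d2 d2] DERIV_mult[OF d3 d3] in \<open>simp_all add: algebra_simps\<close>)
  have l1: "((\<lambda>s. ln (lam + ((a1 s)\<^sup>2 + (a2 s)\<^sup>2 + (a3 s)\<^sup>2))) has_real_derivative
     inverse (lam + ((a1 t)\<^sup>2 + (a2 t)\<^sup>2 + (a3 t)\<^sup>2)) * (0 + (2 * a1 t * e1 + 2 * a2 t * e2 + 2 * a3 t * e3))) (at t)"
    by (rule DERIV_chain2[OF DERIV_ln[OF Lp] r])
  have x: "((\<lambda>s. 1 + x5 s) has_real_derivative 0 + e5) (at t)" by (intro DERIV_add DERIV_const d5)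
  have l2: "((\<lambda>s. ln (1 + x5 s)) has_real_derivative inverse (1 + x5 t) * (0 + e5)) (at t)"
    by (rule DERIV_chain2[OF DERIV_ln[OF x5p] x])
  have "((\<lambda>s. ln (lam + ((a1 s)\<^sup>2 + (a2 s)\<^sup>2 + (a3 s)\<^sup>2)) + 8 * ln (1 + x5 s)) has_real_derivative
     inverse (lam + ((a1 t)\<^sup>2 + (a2 t)\<^sup>2 + (a3 t)\<^sup>2)) * (0 + (2 * a1 t * e1 + 2 * a2 t * e2 + 2 * a3 t * e3))
     + 8 * (inverse (1 + x5 t) * (0 + e5))) (at t)"
    by (intro DERIV_add DERIV_cmult l1 l2)
  then show ?thesis by (simp add: field_simps)
qed

context
  fixes lam :: real and I :: "real set" and x1 x5 a1 a2 a3 :: "real \<Rightarrow> real"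
  assumes lam: "lam > 0" and opn: "open I"
    and s1: "smooth_on I x1" and s5: "smooth_on I x5"
    and sa1: "smooth_on I a1" and sa2: "smooth_on I a2" and sa3: "smooth_on I a3"
    and pts: "\<forall>t\<in>I. x1 t > 0 \<and> (x1 t)\<^sup>2 + (x5 t)\<^sup>2 = 1"
begin

lemma tang:
  assumes t: "t \<in> I"
  shows "x1 t * deriv x1 t + x5 t * deriv x5 t = 0"
proof -
  have d: "((\<lambda>s. x1 s * x1 s + x5 s * x5 s) has_real_derivative
      (deriv x1 t * x1 t + deriv x1 t * x1 t + (deriv x5 t * x5 t + deriv x5 t * x5 t))) (at t)"
    by (intro DERIV_add DERIV_mult smooth_deriv[OF s1 t] smooth_deriv[OF s5 t])
  have "((\<lambda>s. x1 s * x1 s + x5 s * x5 s) has_real_derivative 0) (at t)"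
  proof (rule has_field_derivative_transform_within_open[OF DERIV_const opn t])
    fix s assume "s \<in> I"
    then show "1 = x1 s * x1 s + x5 s * x5 s" using pts by (simp add: power2_eq_square)
  qed
  with d have "deriv x1 t * x1 t + deriv x1 t * x1 t + (deriv x5 t * x5 t + deriv x5 t * x5 t) = 0"
    using DERIV_unique by blast
  then show ?thesis by (simp add: algebra_simps)
qed

lemma core:
  fixes ga gb :: "real \<Rightarrow> complex" and \<tau> :: "real \<Rightarrow> real"
  assumes t: "t \<in> I" and "ga 0 = al" "gb 0 = be" "\<tau> 0 = t"
    and u: "\<forall>s. (cmod (ga s))\<^sup>2 + (cmod (gb s))\<^sup>2 = 1 \<and> \<tau> s \<in> I"
    and dA: "(ga has_vector_derivative A) (at 0)" and dB: "(gb has_vector_derivative B) (at 0)"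
    and dt: "(\<tau> has_real_derivative \<tau>d) (at 0)"
  shows "((\<lambda>s. su2lift (ga s) (gb s) (vector [x1 (\<tau> s),0,0,0,x5 (\<tau> s)], vector [a1 (\<tau> s), a2 (\<tau> s), a3 (\<tau> s)]))
     has_vector_derivative
      (su2R5 al be (vector [\<tau>d * deriv x1 t, x1 t * Im (cnj al * A + cnj be * B), x1 t * Re (al * B - be * A),
                  x1 t * Im (al * B - be * A), \<tau>d * deriv x5 t]),
       \<tau>d *\<^sub>R vector [deriv a1 t, deriv a2 t, deriv a3 t])) (at 0)"
proof -
  have p: "\<forall>s. x1 (\<tau> s) > 0 \<and> (x1 (\<tau> s))\<^sup>2 + (x5 (\<tau> s))\<^sup>2 = 1 \<and> (cmod (ga s))\<^sup>2 + (cmod (gb s))\<^sup>2 = 1"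
    using u pts by blast
  have cd: "((\<lambda>s. su2lift (ga s) (gb s) (vector [x1 (\<tau> s),0,0,0,x5 (\<tau> s)], vector [a1 (\<tau> s), a2 (\<tau> s), a3 (\<tau> s)]))
     has_vector_derivative
      (vector [Re A * x1 t + Re al * (deriv x1 t * \<tau>d), Im A * x1 t + Im al * (deriv x1 t * \<tau>d),
               Re B * x1 t + Re be * (deriv x1 t * \<tau>d), Im B * x1 t + Im be * (deriv x1 t * \<tau>d), deriv x5 t * \<tau>d],
       vector [deriv a1 t * \<tau>d, deriv a2 t * \<tau>d, deriv a3 t * \<tau>d])) (at 0)"
    by (rule curve_deriv[OF assms(2,3,4) dA dB dt smooth_deriv[OF s1 t] smooth_deriv[OF s5 t]
          smooth_deriv[OF sa1 t] smooth_deriv[OF sa2 t] smooth_deriv[OF sa3 t] p])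
  have ual: "(cmod al)\<^sup>2 + (cmod be)\<^sup>2 = 1" using u assms(2,3) by metis
  have c: "Re al * Re A + Im al * Im A + Re be * Re B + Im be * Im B = 0"
    using unit_deriv[OF assms(2,3) dA dB] u by blast
  note dc = decomp[OF ual c, of "x1 t" "deriv x1 t * \<tau>d" "deriv x5 t * \<tau>d"]
  have e3: "(vector [deriv a1 t * \<tau>d, deriv a2 t * \<tau>d, deriv a3 t * \<tau>d] :: real^3) = \<tau>d *\<^sub>R vector [deriv a1 t, deriv a2 t, deriv a3 t]"
    by (simp add: vec3_eq)
  show ?thesis using cd unfolding dc e3 by (simp add: mult.commute)
qed


abbreviation "Fc \<equiv> (\<lambda>al be t. su2lift al be (vector [x1 t, 0, 0, 0, x5 t], vector [a1 t, a2 t, a3 t]))"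

lemma tan_form:
  assumes t: "t \<in> I" and U: "U \<in> tanvecs Fc I al be t"
  shows "\<exists>w1 w2 w3 \<tau>d. U = (su2R5 al be (vector [\<tau>d * deriv x1 t, x1 t * w1, x1 t * w2, x1 t * w3, \<tau>d * deriv x5 t]),
       \<tau>d *\<^sub>R vector [deriv a1 t, deriv a2 t, deriv a3 t])"
proof -
  obtain ga gb \<tau> where g: "ga 0 = al" "gb 0 = be" "\<tau> 0 = t"
     "\<forall>s. (cmod (ga s))\<^sup>2 + (cmod (gb s))\<^sup>2 = 1 \<and> \<tau> s \<in> I"
     "ga differentiable (at 0)" "gb differentiable (at 0)" "\<tau> differentiable (at 0)"
     "((\<lambda>s. Fc (ga s) (gb s) (\<tau> s)) has_vector_derivative U) (at 0)"
    using U unfolding tanvecs_def by blast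
  have dA: "(ga has_vector_derivative vector_derivative ga (at 0)) (at 0)"
    using g(5) vector_derivative_works by blast
  have dB: "(gb has_vector_derivative vector_derivative gb (at 0)) (at 0)"
    using g(6) vector_derivative_works by blast
  have dt: "(\<tau> has_real_derivative deriv \<tau> 0) (at 0)"
    using g(7) DERIV_deriv_iff_real_differentiable by blast
  note cr = core[OF t g(1,2,3,4) dA dB dt]
  from vector_derivative_unique_at[OF g(8) cr] show ?thesis by blast
qed

lemma tan_mem:
  fixes ga gb :: "real \<Rightarrow> complex" and \<tau> :: "real \<Rightarrow> real"
  assumes t: "t \<in> I" and g: "ga 0 = al" "gb 0 = be" "\<tau> 0 = t"
    and u: "\<forall>s. (cmod (ga s))\<^sup>2 + (cmod (gb s))\<^sup>2 = 1 \<and> \<tau> s \<in> I"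
    and dA: "(ga has_vector_derivative A) (at 0)" and dB: "(gb has_vector_derivative B) (at 0)"
    and dt: "(\<tau> has_real_derivative \<tau>d) (at 0)"
  shows "(su2R5 al be (vector [\<tau>d * deriv x1 t, x1 t * Im (cnj al * A + cnj be * B), x1 t * Re (al * B - be * A),
                  x1 t * Im (al * B - be * A), \<tau>d * deriv x5 t]),
       \<tau>d *\<^sub>R vector [deriv a1 t, deriv a2 t, deriv a3 t]) \<in> tanvecs Fc I al be t"
  unfolding tanvecs_def
  apply (rule CollectI)
  apply (rule exI[of _ ga], rule exI[of _ gb], rule exI[of _ \<tau>])
  using g u core[OF t g u dA dB dt] differentiableI_vector[OF dA] differentiableI_vector[OF dB]
    dt real_differentiable_def by blast

lemma phi_closed:
  assumes t: "t \<in> I" and ual: "(cmod al)\<^sup>2 + (cmod be)\<^sup>2 = 1"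
  shows "phiBS lam (Fc al be t)
     (su2R5 al be (vector [tU * deriv x1 t, x1 t * uU1, x1 t * uU2, x1 t * uU3, tU * deriv x5 t]), tU *\<^sub>R vector [deriv a1 t, deriv a2 t, deriv a3 t])
     (su2R5 al be (vector [tV * deriv x1 t, x1 t * uV1, x1 t * uV2, x1 t * uV3, tV * deriv x5 t]), tV *\<^sub>R vector [deriv a1 t, deriv a2 t, deriv a3 t])
     (su2R5 al be (vector [tW * deriv x1 t, x1 t * uW1, x1 t * uW2, x1 t * uW3, tW * deriv x5 t]), tW *\<^sub>R vector [deriv a1 t, deriv a2 t, deriv a3 t])
   = (let s = slam lam (vector [a1 t, a2 t, a3 t]); c = - x5 t * deriv x1 t + x1 t * deriv x5 t;
          a = vector [a1 t, a2 t, a3 t]; A = vector [deriv a1 t, deriv a2 t, deriv a3 t] in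
       Qf s (x1 t) (x5 t) c a A 1 * det3 uU1 uU2 tU uV1 uV2 tV uW1 uW2 tW
     + Qf s (x1 t) (x5 t) c a A 2 * det3 uU1 uU3 tU uV1 uV3 tV uW1 uW3 tW
     - Qf s (x1 t) (x5 t) c a A 3 * det3 uU2 uU3 tU uV2 uV3 tV uW2 uW3 tW)"
proof -
  have x1p: "x1 t > 0" and cs: "(x1 t)\<^sup>2 + (x5 t)\<^sup>2 = 1" using pts t by auto
  have F: "Fc al be t = (su2R5 al be (y0 (x1 t) (x5 t)), vector [a1 t, a2 t, a3 t])"
    using su2lift_y0[OF ual x1p cs] by (simp add: y0_def[OF x1p cs])
  have y5: "((y0 (x1 t) (x5 t))$5)\<^sup>2 < 1" using y05[OF x1p cs] .
  note pp = phi_parts[OF x1p cs tang[OF t]]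
  show ?thesis
    unfolding F phi_inv[OF ual y5]
    unfolding phiBS_def snd_conv pp Qf_def Let_def
    by (simp add: algebra_simps)
qed


lemma dlog:
  assumes t: "t \<in> I"
  shows "deriv (\<lambda>s. ln (lam + ((a1 s)\<^sup>2 + (a2 s)\<^sup>2 + (a3 s)\<^sup>2)) + 8 * ln (1 + x5 s)) t
    = 2 * (a1 t * deriv a1 t + a2 t * deriv a2 t + a3 t * deriv a3 t) / (lam + ((a1 t)\<^sup>2 + (a2 t)\<^sup>2 + (a3 t)\<^sup>2))
      + 8 * deriv x5 t / (1 + x5 t)"
proof -
  have x1p: "x1 t > 0" and cs: "(x1 t)\<^sup>2 + (x5 t)\<^sup>2 = 1" using pts t by auto
  have x5p: "1 + x5 t > 0"
  proof -
    have "(x5 t)\<^sup>2 < 1" using cs x1p by (smt (verit) zero_less_power)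
    then have "\<bar>x5 t\<bar> < 1" by (simp add: abs_square_less_1)
    then show ?thesis by simp
  qed
  have Lp: "lam + ((a1 t)\<^sup>2 + (a2 t)\<^sup>2 + (a3 t)\<^sup>2) > 0" using lam by (simp add: add_pos_nonneg)
  have "((\<lambda>s. ln (lam + ((a1 s)\<^sup>2 + (a2 s)\<^sup>2 + (a3 s)\<^sup>2)) + 8 * ln (1 + x5 s)) has_real_derivative
    2 * (a1 t * deriv a1 t + a2 t * deriv a2 t + a3 t * deriv a3 t) / (lam + ((a1 t)\<^sup>2 + (a2 t)\<^sup>2 + (a3 t)\<^sup>2))
      + 8 * deriv x5 t / (1 + x5 t)) (at t)"
    by (rule dlog0[OF smooth_deriv[OF sa1 t] smooth_deriv[OF sa2 t] smooth_deriv[OF sa3 t] smooth_deriv[OF s5 t] Lp x5p])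
  then show ?thesis by (rule DERIV_imp_deriv)
qed


lemma x5pos: "t \<in> I \<Longrightarrow> 1 + x5 t > 0"
proof -
  assume t: "t \<in> I"
  have x1p: "x1 t > 0" and cs: "(x1 t)\<^sup>2 + (x5 t)\<^sup>2 = 1" using pts t by auto
  have "(x5 t)\<^sup>2 < 1" using cs x1p by (smt (verit) zero_less_power)
  then have "\<bar>x5 t\<bar> < 1" by (simp add: abs_square_less_1)
  then show ?thesis by simp
qed

lemma QODE:
  assumes t: "t \<in> I" and fi: "f t = (vector [a1 t, a2 t, a3 t] :: real^3) $ i"
    and di: "deriv f t = (vector [deriv a1 t, deriv a2 t, deriv a3 t] :: real^3) $ i"
  shows "Qf (slam lam (vector [a1 t, a2 t, a3 t])) (x1 t) (x5 t) (- x5 t * deriv x1 t + x1 t * deriv x5 t)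
           (vector [a1 t, a2 t, a3 t]) (vector [deriv a1 t, deriv a2 t, deriv a3 t]) i = 0
     \<longleftrightarrow> 4 * deriv f t * ((1 - x5 t) / (1 + x5 t))
            - f t * deriv (\<lambda>s. ln (lam + ((a1 s)\<^sup>2 + (a2 s)\<^sup>2 + (a3 s)\<^sup>2)) + 8 * ln (1 + x5 s)) t = 0"
proof -
  define s where "s = slam lam (vector [a1 t, a2 t, a3 t])"
  define L where "L = lam + ((a1 t)\<^sup>2 + (a2 t)\<^sup>2 + (a3 t)\<^sup>2)"
  have sp: "s > 0" unfolding s_def by (rule slam_pos[OF lam])
  have s4: "L = s^4" unfolding s_def L_def by (rule slam_4[OF lam, symmetric])
  have x5p: "1 + x5 t > 0" by (rule x5pos[OF t])
  have cs: "(x1 t)\<^sup>2 + (x5 t)\<^sup>2 = 1" using pts t by auto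
  have Lp: "L > 0" using s4 sp by simp
  note qr = Qrel[OF sp s4 x5p cs tang[OF t], of "deriv f t" "f t" "a1 t * deriv a1 t + a2 t * deriv a2 t + a3 t * deriv a3 t"]
  have eq: "s^3 * Qf s (x1 t) (x5 t) (- x5 t * deriv x1 t + x1 t * deriv x5 t)
           (vector [a1 t, a2 t, a3 t]) (vector [deriv a1 t, deriv a2 t, deriv a3 t]) i
      = (4 * deriv f t * ((1 - x5 t) / (1 + x5 t))
            - f t * deriv (\<lambda>s. ln (lam + ((a1 s)\<^sup>2 + (a2 s)\<^sup>2 + (a3 s)\<^sup>2)) + 8 * ln (1 + x5 s)) t) * (L * (1 + x5 t)\<^sup>2 / 2)"
  proof -
    have e1: "Qf s (x1 t) (x5 t) (- x5 t * deriv x1 t + x1 t * deriv x5 t)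
           (vector [a1 t, a2 t, a3 t]) (vector [deriv a1 t, deriv a2 t, deriv a3 t]) i
       = 2 * s * ((x1 t)\<^sup>2 * deriv f t - 2 * (1 + x5 t) * x1 t * (- x5 t * deriv x1 t + x1 t * deriv x5 t) * f t)
          - 1 / s ^ 3 * ((1 + x5 t)\<^sup>2 * (a1 t * deriv a1 t + a2 t * deriv a2 t + a3 t * deriv a3 t) * f t)"
      unfolding Qf_def fi di by simp
    have e2: "deriv (\<lambda>s. ln (lam + ((a1 s)\<^sup>2 + (a2 s)\<^sup>2 + (a3 s)\<^sup>2)) + 8 * ln (1 + x5 s)) t
       = 2 * (a1 t * deriv a1 t + a2 t * deriv a2 t + a3 t * deriv a3 t) / L + 8 * deriv x5 t / (1 + x5 t)"
      unfolding dlog[OF t] L_def ..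
    show ?thesis using qr by (simp only: e1 e2)
  qed
  have n1: "s^3 \<noteq> 0" using sp by simp
  have n2: "L * (1 + x5 t)\<^sup>2 / 2 \<noteq> 0" using Lp x5p by simp
  define Q where "Q = Qf s (x1 t) (x5 t) (- x5 t * deriv x1 t + x1 t * deriv x5 t)
           (vector [a1 t, a2 t, a3 t]) (vector [deriv a1 t, deriv a2 t, deriv a3 t]) i"
  define Od where "Od = 4 * deriv f t * ((1 - x5 t) / (1 + x5 t))
            - f t * deriv (\<lambda>s. ln (lam + ((a1 s)\<^sup>2 + (a2 s)\<^sup>2 + (a3 s)\<^sup>2)) + 8 * ln (1 + x5 s)) t"
  have eq': "s^3 * Q = Od * (L * (1 + x5 t)\<^sup>2 / 2)" unfolding Q_def Od_def by (rule eq)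
  have "Q = 0 \<longleftrightarrow> s^3 * Q = 0" using n1 by simp
  also have "\<dots> \<longleftrightarrow> Od * (L * (1 + x5 t)\<^sup>2 / 2) = 0" unfolding eq' ..
  also have "\<dots> \<longleftrightarrow> Od = 0" using n2 by simp
  finally show ?thesis unfolding Q_def Od_def s_def .
qed


abbreviation "ODEall t \<equiv> (\<forall>a\<in>{a1, a2, a3}.
            4 * deriv a t * ((1 - x5 t) / (1 + x5 t))
            - a t * deriv (\<lambda>s. ln (lam + ((a1 s)\<^sup>2 + (a2 s)\<^sup>2 + (a3 s)\<^sup>2)) + 8 * ln (1 + x5 s)) t
            = 0)"

abbreviation "Qs t i \<equiv> Qf (slam lam (vector [a1 t, a2 t, a3 t])) (x1 t) (x5 t) (- x5 t * deriv x1 t + x1 t * deriv x5 t)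
           (vector [a1 t, a2 t, a3 t]) (vector [deriv a1 t, deriv a2 t, deriv a3 t]) i"

lemma QO: "t \<in> I \<Longrightarrow> ODEall t \<longleftrightarrow> Qs t 1 = 0 \<and> Qs t 2 = 0 \<and> Qs t 3 = 0"
proof -
  assume t: "t \<in> I"
  have q1: "Qs t 1 = 0 \<longleftrightarrow> 4 * deriv a1 t * ((1 - x5 t) / (1 + x5 t))
            - a1 t * deriv (\<lambda>s. ln (lam + ((a1 s)\<^sup>2 + (a2 s)\<^sup>2 + (a3 s)\<^sup>2)) + 8 * ln (1 + x5 s)) t = 0"
    by (rule QODE[OF t]) simp_all
  have q2: "Qs t 2 = 0 \<longleftrightarrow> 4 * deriv a2 t * ((1 - x5 t) / (1 + x5 t))
            - a2 t * deriv (\<lambda>s. ln (lam + ((a1 s)\<^sup>2 + (a2 s)\<^sup>2 + (a3 s)\<^sup>2)) + 8 * ln (1 + x5 s)) t = 0"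
    by (rule QODE[OF t]) simp_all
  have q3: "Qs t 3 = 0 \<longleftrightarrow> 4 * deriv a3 t * ((1 - x5 t) / (1 + x5 t))
            - a3 t * deriv (\<lambda>s. ln (lam + ((a1 s)\<^sup>2 + (a2 s)\<^sup>2 + (a3 s)\<^sup>2)) + 8 * ln (1 + x5 s)) t = 0"
    by (rule QODE[OF t]) simp_all
  show ?thesis using q1 q2 q3 by auto
qed

lemma main_ctx:
  "phi_vanishes_on_orbit lam I (\<lambda>t. (vector [x1 t, 0, 0, 0, x5 t], vector [a1 t, a2 t, a3 t]))
   \<longleftrightarrow> (\<forall>t\<in>I. ODEall t)"
proof
  assume H: "\<forall>t\<in>I. ODEall t"
  show "phi_vanishes_on_orbit lam I (\<lambda>t. (vector [x1 t, 0, 0, 0, x5 t], vector [a1 t, a2 t, a3 t]))"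
    unfolding phi_vanishes_on_orbit_def Let_def
  proof (intro ballI allI impI)
    fix t al be U V W
    assume t: "t \<in> I" and u: "(cmod al)\<^sup>2 + (cmod be)\<^sup>2 = 1"
      and U: "U \<in> tanvecs Fc I al be t" and V: "V \<in> tanvecs Fc I al be t" and W: "W \<in> tanvecs Fc I al be t"
    have Q: "Qs t 1 = 0" "Qs t 2 = 0" "Qs t 3 = 0" using QO[OF t] H t by auto
    obtain uU1 uU2 uU3 tU where hU: "U = (su2R5 al be (vector [tU * deriv x1 t, x1 t * uU1, x1 t * uU2, x1 t * uU3, tU * deriv x5 t]),
       tU *\<^sub>R vector [deriv a1 t, deriv a2 t, deriv a3 t])" using tan_form[OF t U] by blast
    obtain uV1 uV2 uV3 tV where hV: "V = (su2R5 al be (vector [tV * deriv x1 t, x1 t * uV1, x1 t * uV2, x1 t * uV3, tV * deriv x5 t]),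
       tV *\<^sub>R vector [deriv a1 t, deriv a2 t, deriv a3 t])" using tan_form[OF t V] by blast
    obtain uW1 uW2 uW3 tW where hW: "W = (su2R5 al be (vector [tW * deriv x1 t, x1 t * uW1, x1 t * uW2, x1 t * uW3, tW * deriv x5 t]),
       tW *\<^sub>R vector [deriv a1 t, deriv a2 t, deriv a3 t])" using tan_form[OF t W] by blast
    show "phiBS lam (Fc al be t) U V W = 0"
      unfolding hU hV hW phi_closed[OF t u] Let_def using Q by simp
  qed
next
  assume H: "phi_vanishes_on_orbit lam I (\<lambda>t. (vector [x1 t, 0, 0, 0, x5 t], vector [a1 t, a2 t, a3 t]))"
  show "\<forall>t\<in>I. ODEall t"
  proof
    fix t assume t: "t \<in> I"
    have u10: "(cmod (1::complex))\<^sup>2 + (cmod (0::complex))\<^sup>2 = 1" by simp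
    have HH: "\<forall>U\<in>tanvecs Fc I 1 0 t. \<forall>V\<in>tanvecs Fc I 1 0 t. \<forall>W\<in>tanvecs Fc I 1 0 t.
           phiBS lam (Fc 1 0 t) U V W = 0"
      using H t u10 unfolding phi_vanishes_on_orbit_def Let_def by blast
    obtain e where e: "e > 0" "ball t e \<subseteq> I" using opn t open_contains_ball by blast
    define \<epsilon> where "\<epsilon> = e / 2"
    have ep: "\<epsilon> > 0" using e by (simp add: \<epsilon>_def)
    define Ap where "Ap = (vector [deriv a1 t, deriv a2 t, deriv a3 t] :: real^3)"
    define W1 where "W1 = (su2R5 1 0 (vector [0 * deriv x1 t, x1 t * 1, x1 t * 0, x1 t * 0, 0 * deriv x5 t]), 0 *\<^sub>R Ap)"
    define W2 where "W2 = (su2R5 1 0 (vector [0 * deriv x1 t, x1 t * 0, x1 t * 1, x1 t * 0, 0 * deriv x5 t]), 0 *\<^sub>R Ap)"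
    define W3 where "W3 = (su2R5 1 0 (vector [0 * deriv x1 t, x1 t * 0, x1 t * 0, x1 t * 1, 0 * deriv x5 t]), 0 *\<^sub>R Ap)"
    define T where "T = (su2R5 1 0 (vector [\<epsilon> * deriv x1 t, x1 t * 0, x1 t * 0, x1 t * 0, \<epsilon> * deriv x5 t]), \<epsilon> *\<^sub>R Ap)"
    have uc: "\<forall>s. (cmod (Complex (cos s) (sin s)))\<^sup>2 + (cmod (0::complex))\<^sup>2 = 1 \<and> (\<lambda>s. t) s \<in> I"
      using t by (simp add: cmod_power2)
    have uc2: "\<forall>s. (cmod (Complex (cos s) 0))\<^sup>2 + (cmod (Complex (sin s) 0))\<^sup>2 = 1 \<and> (\<lambda>s. t) s \<in> I"
      using t by (simp add: cmod_power2)
    have uc3: "\<forall>s. (cmod (Complex (cos s) 0))\<^sup>2 + (cmod (Complex 0 (sin s)))\<^sup>2 = 1 \<and> (\<lambda>s. t) s \<in> I"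
      using t by (simp add: cmod_power2)
    have ucT: "\<forall>s. (cmod (1::complex))\<^sup>2 + (cmod (0::complex))\<^sup>2 = 1 \<and> (\<lambda>s. t + \<epsilon> * sin s) s \<in> I"
    proof
      fix s
      have "\<bar>\<epsilon> * sin s\<bar> \<le> \<epsilon>" using ep by (simp add: abs_mult mult_left_le)
      moreover have "\<epsilon> < e" using e by (simp add: \<epsilon>_def)
      moreover have "dist t (t + \<epsilon> * sin s) = \<bar>\<epsilon> * sin s\<bar>" by (simp add: dist_real_def)
      ultimately have "dist t (t + \<epsilon> * sin s) < e" by linarith
      then show "(cmod (1::complex))\<^sup>2 + (cmod (0::complex))\<^sup>2 = 1 \<and> (\<lambda>s. t + \<epsilon> * sin s) s \<in> I"
        using e by auto
    qed
    have dcs: "((\<lambda>s. Complex (cos s) (sin s)) has_vector_derivative \<i>) (at 0)"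
      by (simp add: has_vector_derivative_complex_iff) (auto intro!: derivative_eq_intros)
    have dc: "((\<lambda>s. Complex (cos s) 0) has_vector_derivative 0) (at 0)"
      by (simp add: has_vector_derivative_complex_iff) (auto intro!: derivative_eq_intros)
    have ds: "((\<lambda>s. Complex (sin s) 0) has_vector_derivative 1) (at 0)"
      by (simp add: has_vector_derivative_complex_iff) (auto intro!: derivative_eq_intros)
    have dsi: "((\<lambda>s. Complex 0 (sin s)) has_vector_derivative \<i>) (at 0)"
      by (simp add: has_vector_derivative_complex_iff) (auto intro!: derivative_eq_intros)
    have d1: "((\<lambda>s. 1::complex) has_vector_derivative 0) (at 0)" by simp
    have d0: "((\<lambda>s. 0::complex) has_vector_derivative 0) (at 0)" by simp
    have dt0: "((\<lambda>s. t) has_real_derivative 0) (at 0)" by simp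
    have dtT: "((\<lambda>s. t + \<epsilon> * sin s) has_real_derivative \<epsilon>) (at 0)"
      by (auto intro!: derivative_eq_intros)
    have m1: "W1 \<in> tanvecs Fc I 1 0 t"
      using tan_mem[where al=1 and be=0, OF t _ _ _ uc dcs d0 dt0] unfolding W1_def Ap_def by (simp add: complex_eq_iff)
    have m2: "W2 \<in> tanvecs Fc I 1 0 t"
      using tan_mem[where al=1 and be=0, OF t _ _ _ uc2 dc ds dt0] unfolding W2_def Ap_def by (simp add: complex_eq_iff)
    have m3: "W3 \<in> tanvecs Fc I 1 0 t"
      using tan_mem[where al=1 and be=0, OF t _ _ _ uc3 dc dsi dt0] unfolding W3_def Ap_def by (simp add: complex_eq_iff)
    have mT: "T \<in> tanvecs Fc I 1 0 t"
      using tan_mem[where al=1 and be=0, OF t _ _ _ ucT d1 d0 dtT] unfolding T_def Ap_def by (simp add: complex_eq_iff)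
    have z1: "phiBS lam (Fc 1 0 t) W1 W2 T = 0" using HH m1 m2 mT by blast
    have z2: "phiBS lam (Fc 1 0 t) W1 W3 T = 0" using HH m1 m3 mT by blast
    have z3: "phiBS lam (Fc 1 0 t) W2 W3 T = 0" using HH m2 m3 mT by blast
    have "Qs t 1 * \<epsilon> = 0"
      using z1 unfolding W1_def W2_def T_def Ap_def phi_closed[OF t u10] Let_def by (simp add: det3_def)
    then have Q1: "Qs t 1 = 0" using ep by simp
    have "Qs t 2 * \<epsilon> = 0"
      using z2 unfolding W1_def W3_def T_def Ap_def phi_closed[OF t u10] Let_def by (simp add: det3_def)
    then have Q2: "Qs t 2 = 0" using ep by simp
    have "Qs t 3 * \<epsilon> = 0"
      using z3 unfolding W2_def W3_def T_def Ap_def phi_closed[OF t u10] Let_def by (simp add: det3_def)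
    then have Q3: "Qs t 3 = 0" using ep by simp
    show "ODEall t" using QO[OF t] Q1 Q2 Q3 by blast
  qed
qed

end

theorem mainTheorem4:
  fixes lam :: real and I :: "real set"
    and x1 x5 a1 a2 a3 :: "real \<Rightarrow> real"
  assumes "lam > 0"
    and "open I" and "is_interval I"
    and "smooth_on I x1" and "smooth_on I x5"
    and "smooth_on I a1" and "smooth_on I a2" and "smooth_on I a3"
    and "\<forall>t\<in>I. x1 t > 0 \<and> (x1 t)\<^sup>2 + (x5 t)\<^sup>2 = 1"
  shows "phi_vanishes_on_orbit lam I
           (\<lambda>t. (vector [x1 t, 0, 0, 0, x5 t], vector [a1 t, a2 t, a3 t]))
         \<longleftrightarrow>
         (\<forall>t\<in>I. \<forall>a\<in>{a1, a2, a3}.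
            4 * deriv a t * ((1 - x5 t) / (1 + x5 t))
            - a t * deriv (\<lambda>s. ln (lam + ((a1 s)\<^sup>2 + (a2 s)\<^sup>2 + (a3 s)\<^sup>2)) + 8 * ln (1 + x5 s)) t
            = 0)"
  by (rule main_ctx[OF assms(1,2,4,5,6,7,8,9)])

end
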